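(* Let $T>0$, $H_T=(0,T)\times(0,\infty)$, $\tilde U\in C([0,T])$ with $\tilde U\le0$, and let $w\ge0$ be a classical solution of $$\partial_tw-w^2+\partial_y^{-1}(w+\tilde U)\,\partial_yw-2\tilde Uw+\int_{+\infty}^yw\,dy'-\partial_y^2w=0\ \text{ in }H_T,\qquad w|_{y=0}=-\tilde U(t),\quad\lim_{y\to+\infty}w=0,$$ with $\sup_{H_T}(|w|+|\partial_yw|)e^{y}<\infty$. Let $\rho$ be an admissible weight with constants $C_f,\beta$ and set $G(t)=\int_0^\infty\rho(y)w(t,y)dy$. Then for $t\in(0,T)$, $$\frac{dG}{dt}\ge\frac{2(1-\beta)}{\|\rho\|_{L^1(\mathbb R_+)}}G^2-\|\tilde U\|_{L^\infty([0,T])}(3+C_f)\,G.$$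
   Context: $\partial_y^{-1}f(t,y):=\int_0^yf(t,y')dy'$. Admissible weight: $\rho:[0,\infty)\to[0,\infty)$, $\rho\in W^{2,\infty}(\mathbb R_+)\cap C^1(\mathbb R_+)\cap L^1(\mathbb R_+)$, with $\rho=f$ on $[0,B]$ and $\rho=g$ on $(B,\infty)$, for numbers $0<A<M_0<B<\infty$, functions $f\in C^1([0,B])\cap C^2([0,B]\setminus\{A\})$, $g\in C^2([M_0,\infty))\cap L^1([M_0,\infty))$, a cut-off $\eta\in C^\infty(\mathbb R)$ with $\eta=0$ on $(-\infty,M_0)$, $\eta=1$ on $(B,\infty)$, $0\le\eta'\le\frac{2}{B-M_0}$, and constants $C_f>0$, $\beta\in(0,1)$, such that: (F1) $f(0)=0$, $f>0$ on $(0,B]$; (F2) $yf'(y)\le C_ff(y)$ on $[0,B]$; (F3) $\int_0^yf\,dy'+f''(y)\ge0$ on $[0,B]\setminus\{A\}$; (F4) $f''\le0$ on $[0,B]\setminus\{A\}$; (G1) $\lim_{y\to\infty}g=\lim_{y\to\infty}g'=0$, $g>0$ on $(M_0,\infty)$; (G2) $g'<0$, $g''>0$ on $(M_0,\infty)$; (G3) $\frac{(g')^2}{gg''}\le\beta$ on $[B,\infty)$; (FG1) $f(B)=g(B)$, $f'(B)=g'(B)$; (FG2) $\eta\frac{(g')^2}{fg''}\le\beta$ and $2\eta'g'+\eta g''-f''\ge0$ on $[M_0,B]$. *)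

theory Defs
  imports "HOL-Analysis.Analysis"
begin

definition smooth_real :: "(real \<Rightarrow> real) \<Rightarrow> bool" where
  "smooth_real h \<longleftrightarrow> (\<exists>D :: nat \<Rightarrow> real \<Rightarrow> real. D 0 = h \<and>
      (\<forall>n x. (D n has_real_derivative D (Suc n) x) (at x)))"

text \<open>Derivatives of f, g, eta
  and rho are carried explicitly (f1, f2 = f', f''; etc.).
  W^{2,infinity}(R_+) for a C^1 function is rendered as: rho and rho' bounded
  on [0,infinity) and rho' Lipschitz there.\<close>
definition admissible_weight :: "(real \<Rightarrow> real) \<Rightarrow> real \<Rightarrow> real \<Rightarrow> bool" where
  "admissible_weight \<rho> Cf \<beta> \<longleftrightarrow>
    (\<forall>y\<ge>0. \<rho> y \<ge> 0) \<and>
    \<comment> \<open>C^1(R_+)\<close>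
    (\<exists>\<rho>1. (\<forall>y\<ge>0. (\<rho> has_real_derivative \<rho>1 y) (at y within {0..})) \<and>
          continuous_on {0..} \<rho>1 \<and>
          \<comment> \<open>W^{2,infinity}(R_+)\<close>
          bounded (\<rho> ` {0..}) \<and> bounded (\<rho>1 ` {0..}) \<and>
          (\<exists>L. \<forall>x\<ge>0. \<forall>y\<ge>0. \<bar>\<rho>1 x - \<rho>1 y\<bar> \<le> L * \<bar>x - y\<bar>)) \<and>
    \<comment> \<open>L^1(R_+)\<close>
    \<rho> absolutely_integrable_on {0..} \<and>
    Cf > 0 \<and> 0 < \<beta> \<and> \<beta> < 1 \<and>
    (\<exists>A M0 B f f1 f2 g g1 g2 \<eta> \<eta>1.
       0 < A \<and> A < M0 \<and> M0 < B \<and>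
       (\<forall>y\<in>{0..B}. \<rho> y = f y) \<and> (\<forall>y>B. \<rho> y = g y) \<and>
       \<comment> \<open>f in C^1([0,B]) \<inter> C^2([0,B] - {A})\<close>
       (\<forall>y\<in>{0..B}. (f has_real_derivative f1 y) (at y within {0..B})) \<and>
       continuous_on {0..B} f1 \<and>
       (\<forall>y\<in>{0..B} - {A}. (f1 has_real_derivative f2 y) (at y within {0..B})) \<and>
       continuous_on ({0..B} - {A}) f2 \<and>
       \<comment> \<open>g in C^2([M0,infinity)) \<inter> L^1([M0,infinity))\<close>
       (\<forall>y\<ge>M0. (g has_real_derivative g1 y) (at y within {M0..})) \<and>
       (\<forall>y\<ge>M0. (g1 has_real_derivative g2 y) (at y within {M0..})) \<and>
       continuous_on {M0..} g2 \<and>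
       g absolutely_integrable_on {M0..} \<and>
       \<comment> \<open>cut-off eta\<close>
       smooth_real \<eta> \<and> (\<forall>x. (\<eta> has_real_derivative \<eta>1 x) (at x)) \<and>
       (\<forall>x<M0. \<eta> x = 0) \<and> (\<forall>x>B. \<eta> x = 1) \<and>
       (\<forall>x. 0 \<le> \<eta>1 x \<and> \<eta>1 x \<le> 2 / (B - M0)) \<and>
       \<comment> \<open>(F1)-(F4)\<close>
       f 0 = 0 \<and> (\<forall>y\<in>{0<..B}. f y > 0) \<and>
       (\<forall>y\<in>{0..B}. y * f1 y \<le> Cf * f y) \<and>
       (\<forall>y\<in>{0..B} - {A}. integral {0..y} f + f2 y \<ge> 0) \<and>
       (\<forall>y\<in>{0..B} - {A}. f2 y \<le> 0) \<and>
       \<comment> \<open>(G1)-(G3)\<close>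
       (g \<longlongrightarrow> 0) at_top \<and> (g1 \<longlongrightarrow> 0) at_top \<and> (\<forall>y>M0. g y > 0) \<and>
       (\<forall>y>M0. g1 y < 0 \<and> g2 y > 0) \<and>
       (\<forall>y\<ge>B. (g1 y)\<^sup>2 / (g y * g2 y) \<le> \<beta>) \<and>
       \<comment> \<open>(FG1)-(FG2)\<close>
       f B = g B \<and> f1 B = g1 B \<and>
       (\<forall>y\<in>{M0..B}. \<eta> y * (g1 y)\<^sup>2 / (f y * g2 y) \<le> \<beta> \<and>
                      2 * \<eta>1 y * g1 y + \<eta> y * g2 y - f2 y \<ge> 0))"

end

theory Submission
  imports Defs
begin

lemma integrable_bound_cont:
  fixes f :: "real \<Rightarrow> real"
  assumes "continuous_on {a..} f" "\<And>x. x \<ge> a \<Longrightarrow> \<bar>f x\<bar> \<le> c * exp(-x)"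
  shows "f integrable_on {a..}"
proof (rule measurable_bounded_by_integrable_imp_integrable)
  show "f \<in> borel_measurable (lebesgue_on {a..})"
    using assms(1) by (simp add: continuous_imp_measurable_on_sets_lebesgue measurable_on_iff_borel_measurable)
  show "(\<lambda>x. c * exp(-x)) integrable_on {a..}"
    using integrable_cmul[OF integrable_on_exp_minus_to_infinity[of 1 a], of c] by simp
qed (use assms in auto)

lemma abs_mult_le: "\<bar>a\<bar> \<le> (X::real) \<Longrightarrow> \<bar>b\<bar> \<le> Y \<Longrightarrow> \<bar>a * b\<bar> \<le> X * Y"
  by (simp add: abs_mult mult_mono')

lemma integral_abs_le:
  fixes f g :: "real \<Rightarrow> real"
  assumes "f integrable_on S" "g integrable_on S" "\<And>x. x \<in> S \<Longrightarrow> \<bar>f x\<bar> \<le> g x"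
  shows "\<bar>integral S f\<bar> \<le> integral S g"
  using integral_norm_bound_integral[of f S g] assms by auto

lemma exp_has_integral:
  fixes a b :: real assumes "a \<le> b"
  shows "((\<lambda>x. exp(-x)) has_integral (exp(-a) - exp(-b))) {a..b}"
proof -
  have "((\<lambda>x. exp(-x)) has_integral ((-exp(-b)) - (-exp(-a)))) {a..b}"
    using assms by (intro fundamental_theorem_of_calculus)
         (auto intro!: derivative_eq_intros simp flip: has_real_derivative_iff_has_vector_derivative)
  then show ?thesis by simp
qed

lemma exp_has_integral_inf:
  fixes a :: real
  shows "((\<lambda>x. exp(-x)) has_integral exp(-a)) {a..}"
  using has_integral_exp_minus_to_infinity[of 1 a] by simp

lemma at_right_bound:
  fixes h :: "real \<Rightarrow> real"
  assumes "continuous_on {0..} h" "\<And>y. y > 0 \<Longrightarrow> h y \<le> c"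
  shows "h 0 \<le> c"
proof -
  have "(h \<longlongrightarrow> h 0) (at 0 within {0..})"
    using assms(1) by (simp add: continuous_on_def)
  then have "(h \<longlongrightarrow> h 0) (at_right 0)"
    by (rule tendsto_within_subset) auto
  moreover have "\<forall>\<^sub>F y in at_right 0. h y \<le> c"
    using eventually_at_right_less[of "0::real"] by eventually_elim (use assms in auto)
  ultimately show ?thesis
    by (intro tendsto_upperbound[of h "h 0" "at_right 0"]) auto
qed

lemma deriv_at_from_within:
  fixes F :: "real \<Rightarrow> real"
  assumes "(F has_real_derivative d) (at y within S)" "open T" "y \<in> T" "T \<subseteq> S"
  shows "(F has_real_derivative d) (at y)"
  using DERIV_subset[OF assms(1) assms(4)] at_within_open[OF assms(3,2)] by simp

definition en :: "nat \<Rightarrow> real" where "en n = inverse (real (Suc n))"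
definition Rn :: "nat \<Rightarrow> real" where "Rn n = real (Suc n)"

lemma en_Rn: "0 < en n" "en n \<le> 1" "1 \<le> Rn n" "m \<ge> n \<Longrightarrow> en m \<le> en n" "m \<ge> n \<Longrightarrow> Rn n \<le> Rn m"
  by (auto simp: en_def Rn_def field_simps)

lemma en_lim: "en \<longlonglongrightarrow> 0"
  using LIMSEQ_inverse_real_of_nat by (simp add: en_def[abs_def])

lemma Rn_lim: "filterlim Rn at_top sequentially"
  unfolding Rn_def[abs_def]
  by (rule filterlim_compose[OF filterlim_real_sequentially filterlim_Suc])

lemma lim_exp_at_top: "((\<lambda>x::real. (c + x) * exp(-x)) \<longlongrightarrow> 0) at_top"
proof -
  have "((\<lambda>x::real. c * (x^0 / exp x) + x^1 / exp x) \<longlongrightarrow> c * 0 + 0) at_top"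
    by (intro tendsto_intros tendsto_power_div_exp_0)
  then show ?thesis by (simp add: exp_minus field_simps)
qed

lemma lim_exp_seq: "(\<lambda>n. (c + Rn n) * exp(- Rn n)) \<longlonglongrightarrow> 0"
  by (rule filterlim_compose[OF lim_exp_at_top Rn_lim])

lemma exp_lin_has_integral:
  fixes a b :: real assumes "a \<le> b"
  shows "((\<lambda>x. (1+x)*exp(-x)) has_integral ((2+a)*exp(-a) - (2+b)*exp(-b))) {a..b}"
proof -
  have "((\<lambda>x. (1+x)*exp(-x)) has_integral ((-(2+b)*exp(-b)) - (-(2+a)*exp(-a)))) {a..b}"
    using assms by (intro fundamental_theorem_of_calculus)
         (auto intro!: derivative_eq_intros simp: algebra_simps simp flip: has_real_derivative_iff_has_vector_derivative)
  then show ?thesis by (simp add: algebra_simps)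
qed

lemma trunc_lim:
  fixes q h :: "real \<Rightarrow> real"
  assumes qc: "continuous_on {0..} q" and h: "h integrable_on {0..}"
    and bd: "\<And>y. y \<ge> 0 \<Longrightarrow> \<bar>q y\<bar> \<le> h y" and q0: "q 0 = 0"
  shows "(\<lambda>n. integral {en n..Rn n} q) \<longlonglongrightarrow> integral {0..} q"
proof -
  define F where "F k = (\<lambda>y. if y \<in> {en k..Rn k} then q y else 0)" for k
  have sub: "{0..} \<inter> {en k..Rn k} = {en k..Rn k}" for k using en_Rn(1)[of k] by auto
  have Fi: "F k integrable_on {0..}" for k
    unfolding F_def integrable_restrict_Int[where S="{en k..Rn k}" and T="{0..}", simplified Int_commute] sub
    by (rule integrable_continuous_interval, rule continuous_on_subset[OF qc]) (use en_Rn(1)[of k] in auto)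
  have "(\<lambda>k. integral {0..} (F k)) \<longlonglongrightarrow> integral {0..} q"
  proof (rule Equivalence_Lebesgue_Henstock_Integration.dominated_convergence(2)[OF Fi h])
    show "norm (F k y) \<le> h y" if "y \<in> {0..}" for k y
      using bd[of y] that order_trans[OF abs_ge_zero bd[of y]] by (auto simp: F_def)
    show "(\<lambda>k. F k y) \<longlonglongrightarrow> q y" if "y \<in> {0..}" for y
    proof (cases "y = 0")
      case True
      have "F k y = 0" for k using True q0 unfolding F_def by auto
      then show ?thesis using True q0 by simp
    next
      case False
      then have y: "y > 0" using that by auto
      have "\<forall>\<^sub>F k in sequentially. en k < y" using order_tendstoD(2)[OF en_lim y] .
      moreover have "\<forall>\<^sub>F k in sequentially. y < Rn k" using filterlim_at_top_dense[THEN iffD1, OF Rn_lim] by auto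
      ultimately have "\<forall>\<^sub>F k in sequentially. F k y = q y"
        by eventually_elim (auto simp: F_def)
      then show ?thesis by (rule tendsto_eventually)
    qed
  qed
  moreover have "integral {0..} (F k) = integral {en k..Rn k} q" for k
    unfolding F_def integral_restrict_Int using en_Rn(1)[of k] by (simp add: max_absorb2 less_imp_le)
  ultimately show ?thesis by simp
qed

lemma pw_U:
  fixes \<rho> w U K y \<rho>1 Cf :: real
  assumes "\<rho> \<ge> 0" "w \<ge> 0" "U \<le> 0" "\<bar>U\<bar> \<le> K" "y * \<rho>1 \<le> Cf * \<rho>" "Cf > 0"
  shows "U * (3 * \<rho> + y * \<rho>1) * w + K * (3 + Cf) * \<rho> * w \<ge> 0"
proof (cases "3 * \<rho> + y * \<rho>1 \<ge> 0")
  case True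
  have "-U \<le> K" using assms by linarith
  then have "(-U) * ((3 * \<rho> + y * \<rho>1) * w) \<le> K * ((3 * \<rho> + y * \<rho>1) * w)"
    using True assms by (intro mult_right_mono) auto
  moreover have "K * ((3 * \<rho> + y * \<rho>1) * w) \<le> K * ((3 + Cf) * \<rho> * w)"
    using assms order_trans[OF abs_ge_zero assms(4)] by (intro mult_left_mono mult_right_mono) (auto simp: algebra_simps)
  ultimately show ?thesis by (simp add: algebra_simps)
next
  case False
  have "U * (3 * \<rho> + y * \<rho>1) \<ge> 0" using False assms by (simp add: mult_nonpos_nonpos)
  then have "U * (3 * \<rho> + y * \<rho>1) * w \<ge> 0" using assms by simp
  moreover have "K * (3 + Cf) * \<rho> * w \<ge> 0" using assms order_trans[OF abs_ge_zero assms(4)] by simp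
  ultimately show ?thesis by linarith
qed

lemma pw_lam:
  fixes \<rho> w \<beta> lam :: real
  assumes "\<rho> \<ge> 0" "\<beta> < 1"
  shows "2 * \<rho> * w\<^sup>2 - 2 * (1 - \<beta>) * (2 * lam * \<rho> * w - lam\<^sup>2 * \<rho>) \<ge> 2 * \<beta> * \<rho> * w\<^sup>2"
proof -
  have "2 * \<rho> * w\<^sup>2 - 2 * (1 - \<beta>) * (2 * lam * \<rho> * w - lam\<^sup>2 * \<rho>) - 2 * \<beta> * \<rho> * w\<^sup>2
     = 2 * (1 - \<beta>) * (\<rho> * (w - lam)\<^sup>2)" by (simp add: algebra_simps power2_eq_square)
  moreover have "2 * (1 - \<beta>) * (\<rho> * (w - lam)\<^sup>2) \<ge> 0" using assms by simp
  ultimately show ?thesis by linarith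
qed

lemma pw_sos:
  fixes \<rho> w W \<beta> \<eta> g1 g2 :: real
  assumes "g2 > 0" "\<eta> \<ge> 0" "\<eta> * g1\<^sup>2 \<le> \<beta> * \<rho> * g2"
  shows "2 * \<beta> * \<rho> * w\<^sup>2 + \<eta> * g2 * W\<^sup>2 / 2 + 2 * \<eta> * g1 * W * w \<ge> 0"
proof -
  have a: "\<eta> * (g2 * W + 2 * g1 * w)\<^sup>2 \<ge> 0" using assms by simp
  have b: "4 * (\<eta> * g1\<^sup>2) * w\<^sup>2 \<le> 4 * (\<beta> * \<rho> * g2) * w\<^sup>2"
    using assms by (intro mult_right_mono) auto
  have "2 * g2 * (2 * \<beta> * \<rho> * w\<^sup>2 + \<eta> * g2 * W\<^sup>2 / 2 + 2 * \<eta> * g1 * W * w)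
      = 4 * (\<beta> * \<rho> * g2) * w\<^sup>2 - 4 * (\<eta> * g1\<^sup>2) * w\<^sup>2 + \<eta> * (g2 * W + 2 * g1 * w)\<^sup>2"
    by (simp add: algebra_simps power2_eq_square)
  then have "2 * g2 * (2 * \<beta> * \<rho> * w\<^sup>2 + \<eta> * g2 * W\<^sup>2 / 2 + 2 * \<eta> * g1 * W * w) \<ge> 0"
    using a b by linarith
  then show ?thesis using assms(1) by (simp add: zero_le_mult_iff)
qed

lemma pw_lo:
  fixes \<rho> w W U K y \<rho>1 \<rho>2 Cf P \<beta> lam :: real
  assumes "\<rho> \<ge> 0" "w \<ge> 0" "U \<le> 0" "\<bar>U\<bar> \<le> K" "y * \<rho>1 \<le> Cf * \<rho>" "Cf > 0" "\<beta> > 0" "\<beta> < 1"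
    "\<rho>2 \<le> 0" "P + \<rho>2 \<ge> 0"
  shows "2 * \<rho> * w\<^sup>2 + U * (3 * \<rho> + y * \<rho>1) * w + P * w + \<rho>2 * w - \<rho>2 * W\<^sup>2 / 2
     - (2 * (1 - \<beta>) * (2 * lam * \<rho> * w - lam\<^sup>2 * \<rho>) - K * (3 + Cf) * \<rho> * w) \<ge> 0"
proof -
  note u = pw_U[OF assms(1-6)] and l = pw_lam[OF assms(1,8), of w lam]
  have "(P + \<rho>2) * w \<ge> 0" using assms by simp
  moreover have "- \<rho>2 * W\<^sup>2 / 2 \<ge> 0" using assms by (simp add: mult_nonpos_nonneg)
  moreover have "2 * \<beta> * \<rho> * w\<^sup>2 \<ge> 0" using assms by simp
  ultimately show ?thesis using u l by (simp add: algebra_simps)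
qed

lemma pw_hi:
  fixes \<rho> w W U K y \<rho>1 \<rho>2 Cf P \<beta> lam \<eta> \<eta>1 g1 g2 :: real
  assumes "\<rho> \<ge> 0" "w \<ge> 0" "U \<le> 0" "\<bar>U\<bar> \<le> K" "y * \<rho>1 \<le> Cf * \<rho>" "Cf > 0" "\<beta> > 0" "\<beta> < 1"
    "\<rho>2 \<le> 2 * \<eta>1 * g1 + \<eta> * g2" "P + \<rho>2 \<ge> 0" "g2 > 0" "\<eta> \<ge> 0" "\<eta> * g1\<^sup>2 \<le> \<beta> * \<rho> * g2"
  shows "2 * \<rho> * w\<^sup>2 + U * (3 * \<rho> + y * \<rho>1) * w + P * w + \<rho>2 * w - \<rho>2 * W\<^sup>2 / 2
     - (2 * (1 - \<beta>) * (2 * lam * \<rho> * w - lam\<^sup>2 * \<rho>) - K * (3 + Cf) * \<rho> * w)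
     + (\<eta>1 * g1 * W\<^sup>2 + \<eta> * g2 * W\<^sup>2 + 2 * \<eta> * g1 * W * w) \<ge> 0"
proof -
  note u = pw_U[OF assms(1-6)] and l = pw_lam[OF assms(1,8), of w lam]
  note s = pw_sos[OF assms(11-13), of w W]
  have "(P + \<rho>2) * w \<ge> 0" using assms by simp
  moreover have "\<rho>2 * W\<^sup>2 \<le> (2 * \<eta>1 * g1 + \<eta> * g2) * W\<^sup>2" using assms by (intro mult_right_mono) auto
  ultimately show ?thesis using u l s by (simp add: algebra_simps)
qed

locale setting =
  fixes T :: real and U :: "real \<Rightarrow> real"
    and w wt wy wyy :: "real \<Rightarrow> real \<Rightarrow> real"
    and \<rho> \<rho>1 :: "real \<Rightarrow> real" and Cf \<beta> C K Rb R1 :: real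
    and A M0 B :: real and f f1 f2 g g1 g2 \<eta> \<eta>1 :: "real \<Rightarrow> real"
  assumes T_pos: "T > 0"
    and U_nonpos: "\<forall>t\<in>{0..T}. U t \<le> 0"
    and U_bd: "\<forall>t\<in>{0..T}. \<bar>U t\<bar> \<le> K"
    and w_cont: "continuous_on ({0<..<T} \<times> {0..}) (\<lambda>p. w (fst p) (snd p))"
    and wt_deriv: "\<forall>t\<in>{0<..<T}. \<forall>y>0. ((\<lambda>s. w s y) has_real_derivative wt t y) (at t)"
    and wy_deriv: "\<forall>t\<in>{0<..<T}. \<forall>y>0. (w t has_real_derivative wy t y) (at y)"
    and wyy_deriv: "\<forall>t\<in>{0<..<T}. \<forall>y>0. (wy t has_real_derivative wyy t y) (at y)"
    and wt_cont: "continuous_on ({0<..<T} \<times> {0<..}) (\<lambda>p. wt (fst p) (snd p))"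
    and w_nonneg: "\<forall>t\<in>{0<..<T}. \<forall>y\<ge>0. w t y \<ge> 0"
    and eq: "\<forall>t\<in>{0<..<T}. \<forall>y>0.
               wt t y - (w t y)\<^sup>2
               + (integral {0..y} (w t) + U t * y) * wy t y
               - 2 * U t * w t y
               - integral {y..} (w t)
               - wyy t y = 0"
    and decay: "\<forall>t\<in>{0<..<T}. \<forall>y>0. (\<bar>w t y\<bar> + \<bar>wy t y\<bar>) * exp y \<le> C"
    and rho_nonneg: "\<forall>y\<ge>0. \<rho> y \<ge> 0"
    and rho_deriv: "\<forall>y\<ge>0. (\<rho> has_real_derivative \<rho>1 y) (at y within {0..})"
    and rho1_cont: "continuous_on {0..} \<rho>1"
    and rho_bd: "\<forall>y\<ge>0. \<bar>\<rho> y\<bar> \<le> Rb"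
    and rho1_bd: "\<forall>y\<ge>0. \<bar>\<rho>1 y\<bar> \<le> R1"
    and rho_int: "\<rho> absolutely_integrable_on {0..}"
    and Cf_pos: "Cf > 0" and beta_pos: "0 < \<beta>" and beta_lt: "\<beta> < 1"
    and ABM: "0 < A" "A < M0" "M0 < B"
    and rho_f: "\<forall>y\<in>{0..B}. \<rho> y = f y" and rho_g: "\<forall>y>B. \<rho> y = g y"
    and f_deriv: "\<forall>y\<in>{0..B}. (f has_real_derivative f1 y) (at y within {0..B})"
    and f1_deriv: "\<forall>y\<in>{0..B} - {A}. (f1 has_real_derivative f2 y) (at y within {0..B})"
    and g_deriv: "\<forall>y\<ge>M0. (g has_real_derivative g1 y) (at y within {M0..})"
    and g1_deriv: "\<forall>y\<ge>M0. (g1 has_real_derivative g2 y) (at y within {M0..})"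
    and eta_deriv: "\<forall>x. (\<eta> has_real_derivative \<eta>1 x) (at x)"
    and eta0: "\<forall>x<M0. \<eta> x = 0" and eta1: "\<forall>x>B. \<eta> x = 1"
    and eta1_bd: "\<forall>x. 0 \<le> \<eta>1 x"
    and F1: "f 0 = 0" "\<forall>y\<in>{0<..B}. f y > 0"
    and F2: "\<forall>y\<in>{0..B}. y * f1 y \<le> Cf * f y"
    and F3: "\<forall>y\<in>{0..B} - {A}. integral {0..y} f + f2 y \<ge> 0"
    and F4: "\<forall>y\<in>{0..B} - {A}. f2 y \<le> 0"
    and G1: "(g1 \<longlongrightarrow> 0) at_top" "\<forall>y>M0. g y > 0"
    and G2: "\<forall>y>M0. g1 y < 0 \<and> g2 y > 0"
    and G3: "\<forall>y\<ge>B. (g1 y)\<^sup>2 / (g y * g2 y) \<le> \<beta>"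
    and FG2: "\<forall>y\<in>{M0..B}. \<eta> y * (g1 y)\<^sup>2 / (f y * g2 y) \<le> \<beta> \<and>
                      2 * \<eta>1 y * g1 y + \<eta> y * g2 y - f2 y \<ge> 0"
begin

lemma C_nonneg: "C \<ge> 0"
proof -
  have "(\<bar>w (T/2) 1\<bar> + \<bar>wy (T/2) 1\<bar>) * exp 1 \<le> C" using decay T_pos by auto
  moreover have "(\<bar>w (T/2) 1\<bar> + \<bar>wy (T/2) 1\<bar>) * exp 1 \<ge> 0" by simp
  ultimately show ?thesis by linarith
qed

lemma w_cont_s: "s \<in> {0<..<T} \<Longrightarrow> continuous_on {0..} (w s)"
proof -
  assume s: "s \<in> {0<..<T}"
  have "continuous_on {0..} ((\<lambda>p. w (fst p) (snd p)) \<circ> (\<lambda>y. (s, y)))"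
    by (rule continuous_on_compose[OF continuous_on_Pair[OF continuous_on_const continuous_on_id]])
       (rule continuous_on_subset[OF w_cont], use s in auto)
  then show ?thesis by (simp add: o_def)
qed

lemma w_bd: assumes "s \<in> {0<..<T}" "y \<ge> 0" shows "\<bar>w s y\<bar> \<le> C * exp (-y)"
proof -
  have pos: "\<bar>w s y\<bar> \<le> C * exp (-y)" if "y > 0" for y
  proof -
    have "(\<bar>w s y\<bar> + \<bar>wy s y\<bar>) * exp y \<le> C" using decay assms that by auto
    then have "\<bar>w s y\<bar> * exp y \<le> C" by (smt (verit) exp_gt_zero mult_right_mono abs_ge_zero distrib_right)
    then have "\<bar>w s y\<bar> \<le> C / exp y" by (simp add: field_simps)
    then show ?thesis by (simp add: exp_minus field_simps)
  qed
  show ?thesis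
  proof (cases "y = 0")
    case True
    have "\<bar>w s 0\<bar> \<le> C"
    proof (rule at_right_bound[of "\<lambda>y. \<bar>w s y\<bar>"])
      show "continuous_on {0..} (\<lambda>y. \<bar>w s y\<bar>)" using w_cont_s[OF assms(1)] by (intro continuous_intros)
      fix y :: real assume "y > 0"
      then have "\<bar>w s y\<bar> \<le> C * exp (-y)" by (rule pos)
      also have "\<dots> \<le> C" using C_nonneg \<open>y>0\<close> by (simp add: mult_left_le)
      finally show "\<bar>w s y\<bar> \<le> C" .
    qed
    then show ?thesis using True by simp
  qed (use pos assms in auto)
qed

lemma wy_bd: assumes "s \<in> {0<..<T}" "y > 0" shows "\<bar>wy s y\<bar> \<le> C * exp (-y)"
proof -
  have "(\<bar>w s y\<bar> + \<bar>wy s y\<bar>) * exp y \<le> C" using decay assms by auto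
  then have "\<bar>wy s y\<bar> * exp y \<le> C" by (smt (verit) exp_gt_zero mult_right_mono abs_ge_zero distrib_right)
  then have "\<bar>wy s y\<bar> \<le> C / exp y" by (simp add: field_simps)
  then show ?thesis by (simp add: exp_minus field_simps)
qed

definition "W s y = integral {0..y} (w s)"
definition "V s y = integral {y..} (w s)"
definition "P y = integral {0..y} \<rho>"

lemma w_int: assumes "s \<in> {0<..<T}" "a \<ge> 0" shows "w s integrable_on {a..}"
  by (rule integrable_bound_cont[where c=C])
     (use continuous_on_subset[OF w_cont_s[OF assms(1)]] w_bd[OF assms(1)] assms(2) in auto)

lemma w_cont_ab: assumes "s \<in> {0<..<T}" "a \<ge> 0" shows "continuous_on {a..b} (w s)"
  by (rule continuous_on_subset[OF w_cont_s[OF assms(1)]]) (use assms in auto)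

lemma W_bd: assumes "s \<in> {0<..<T}" "y \<ge> 0" shows "\<bar>W s y\<bar> \<le> C"
proof -
  have "\<bar>W s y\<bar> \<le> integral {0..y} (\<lambda>x. C * exp(-x))"
    unfolding W_def
    by (rule integral_abs_le)
       (use integrable_continuous_interval[OF w_cont_ab[OF assms(1), of 0 y]] w_bd[OF assms(1)] in
        \<open>auto intro!: integrable_continuous_interval continuous_intros\<close>)
  also have "\<dots> = C * (1 - exp(-y))"
    using integral_unique[OF has_integral_mult_right[OF exp_has_integral[OF assms(2)], of C]] by simp
  also have "\<dots> \<le> C" using C_nonneg by (simp add: mult_left_le)
  finally show ?thesis .
qed

lemma V_bd: assumes "s \<in> {0<..<T}" "y \<ge> 0" shows "\<bar>V s y\<bar> \<le> C * exp (-y)"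
proof -
  have "\<bar>V s y\<bar> \<le> integral {y..} (\<lambda>x. C * exp(-x))"
    unfolding V_def
    by (rule integral_abs_le)
       (use w_int[OF assms] w_bd[OF assms(1)] assms(2) has_integral_mult_right[OF exp_has_integral_inf[of y], of C] in auto)
  also have "\<dots> = C * exp(-y)"
    using integral_unique[OF has_integral_mult_right[OF exp_has_integral_inf[of y], of C]] by simp
  finally show ?thesis .
qed

lemma V_eq: assumes "s \<in> {0<..<T}" "y \<ge> 0" shows "V s y = integral {0..} (w s) - W s y"
proof -
  have "(w s has_integral (W s y + V s y)) ({0..y} \<union> {y..})"
    unfolding W_def V_def
    by (rule has_integral_Un)
       (use integrable_continuous_interval[OF w_cont_ab[OF assms(1), of 0 y]] w_int[OF assms] assms(2) in
         \<open>auto simp: integrable_integral max_absorb2\<close>)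
  moreover have "{0..y} \<union> {y..} = {0::real..}" using assms(2) by auto
  ultimately show ?thesis by (simp add: integral_unique)
qed

lemma W_deriv: assumes "s \<in> {0<..<T}" "y > 0" shows "(W s has_real_derivative w s y) (at y)"
proof -
  have "(W s has_real_derivative w s y) (at y within {0..y+1})"
    unfolding W_def[abs_def]
    by (rule integral_has_real_derivative) (use w_cont_ab[OF assms(1)] assms in auto)
  then show ?thesis by (rule deriv_at_from_within[where T="{0<..<y+1}"]) (use assms in auto)
qed

lemma V_deriv: assumes "s \<in> {0<..<T}" "y > 0" shows "(V s has_real_derivative - w s y) (at y)"
proof -
  have "((\<lambda>y. integral {0..} (w s) - W s y) has_real_derivative - w s y) (at y)"
    using W_deriv[OF assms] by (auto intro!: derivative_eq_intros)
  then show ?thesis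
    by (rule has_field_derivative_transform_within_open[where S="{0<..}"]) (use V_eq[OF assms(1)] assms in auto)
qed

lemma rho_cont: "continuous_on {0..} \<rho>"
  unfolding continuous_on_eq_continuous_within
  using rho_deriv DERIV_continuous by blast

lemma rho_at: "y > 0 \<Longrightarrow> (\<rho> has_real_derivative \<rho>1 y) (at y)"
  by (rule deriv_at_from_within[where T="{0<..}" and S="{0..}"]) (use rho_deriv in auto)

lemma P_deriv: "y > 0 \<Longrightarrow> (P has_real_derivative \<rho> y) (at y)"
proof -
  assume y: "y > 0"
  have "(P has_real_derivative \<rho> y) (at y within {0..y+1})"
    unfolding P_def[abs_def]
    by (rule integral_has_real_derivative) (use continuous_on_subset[OF rho_cont] y in auto)
  then show ?thesis by (rule deriv_at_from_within[where T="{0<..<y+1}"]) (use y in auto)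
qed

lemma rho0: "\<rho> 0 = 0" using rho_f F1 ABM by auto

lemma P_bd: assumes "y \<ge> 0" shows "\<bar>P y\<bar> \<le> Rb * y" "P y \<ge> 0"
proof -
  have "\<bar>P y\<bar> \<le> integral {0..y} (\<lambda>x. Rb)"
    unfolding P_def
    by (rule integral_abs_le)
       (use continuous_on_subset[OF rho_cont] rho_bd in \<open>auto intro!: integrable_continuous_interval\<close>)
  then show "\<bar>P y\<bar> \<le> Rb * y" using assms by (simp add: mult.commute)
  show "P y \<ge> 0" unfolding P_def
    by (rule integral_nonneg) (use continuous_on_subset[OF rho_cont] rho_nonneg in \<open>auto intro!: integrable_continuous_interval\<close>)
qed

lemma rho1_0: "\<rho>1 0 \<ge> 0"
proof -
  have "((\<lambda>y. (\<rho> y - \<rho> 0) / (y - 0)) \<longlongrightarrow> \<rho>1 0) (at 0 within {0..})"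
    using rho_deriv by (auto simp: has_field_derivative_iff)
  then have "((\<lambda>y. (\<rho> y - \<rho> 0) / (y - 0)) \<longlongrightarrow> \<rho>1 0) (at_right 0)"
    by (rule tendsto_within_subset) auto
  moreover have "\<forall>\<^sub>F y in at_right 0. 0 \<le> (\<rho> y - \<rho> 0) / (y - 0)"
    using eventually_at_right_less[of "0::real"] by eventually_elim (use rho0 rho_nonneg in auto)
  ultimately show ?thesis by (intro tendsto_lowerbound) auto
qed

lemma isCont_parts:
  assumes s: "s \<in> {0<..<T}" and y: "y > 0"
  shows "isCont (w s) y" "isCont (wy s) y" "isCont (W s) y" "isCont (V s) y"
    "isCont \<rho> y" "isCont \<rho>1 y" "isCont P y" "isCont (wt s) y"
proof -
  show "isCont (w s) y" using wy_deriv s y DERIV_isCont by blast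
  show "isCont (wy s) y" using wyy_deriv s y DERIV_isCont by blast
  show "isCont (W s) y" using W_deriv[OF s y] DERIV_isCont by blast
  show "isCont (V s) y" using V_deriv[OF s y] DERIV_isCont by blast
  show "isCont \<rho> y" using rho_at[OF y] DERIV_isCont by blast
  show "isCont P y" using P_deriv[OF y] DERIV_isCont by blast
  show "isCont \<rho>1 y" using continuous_on_interior[OF rho1_cont, of y] y by auto
  have "continuous_on {0<..} (wt s)"
  proof -
    have "continuous_on {0<..} ((\<lambda>p. wt (fst p) (snd p)) \<circ> (\<lambda>y. (s, y)))"
      by (rule continuous_on_compose[OF continuous_on_Pair[OF continuous_on_const continuous_on_id]])
         (rule continuous_on_subset[OF wt_cont], use s in auto)
    then show ?thesis by (simp add: o_def)
  qed
  then show "isCont (wt s) y" using continuous_on_interior[of "{0<..}" "wt s" y] y by (simp add: interior_open)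
qed

definition "D0 s y = - \<rho> y * W s y * w s y - U s * y * \<rho> y * w s y + P y * V s y + \<rho> y * wy s y"
definition "rem s y = 2 * \<rho> y * (w s y)\<^sup>2 + \<rho>1 y * W s y * w s y + U s * (3 * \<rho> y + y * \<rho>1 y) * w s y
    + P y * w s y - \<rho>1 y * wy s y"

lemma wt_eq: assumes s: "s \<in> {0<..<T}" and y: "y > 0"
  shows "wt s y = (w s y)\<^sup>2 - (W s y + U s * y) * wy s y + 2 * U s * w s y + V s y + wyy s y"
  using eq s y unfolding W_def V_def by (auto simp: algebra_simps)

lemma D0_deriv: assumes s: "s \<in> {0<..<T}" and y: "y > 0"
  shows "(D0 s has_real_derivative (\<rho> y * wt s y - rem s y)) (at y)"
proof -
  have w1: "(w s has_real_derivative wy s y) (at y)" using wy_deriv s y by auto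
  have w2: "(wy s has_real_derivative wyy s y) (at y)" using wyy_deriv s y by auto
  have "(D0 s has_real_derivative
      (- (\<rho>1 y * W s y * w s y + \<rho> y * w s y * w s y + \<rho> y * W s y * wy s y)
       - U s * (\<rho> y * w s y + y * \<rho>1 y * w s y + y * \<rho> y * wy s y)
       + (\<rho> y * V s y + P y * (- w s y)) + (\<rho>1 y * wy s y + \<rho> y * wyy s y))) (at y)"
    unfolding D0_def[abs_def]
    by (auto intro!: derivative_eq_intros W_deriv[OF s y] V_deriv[OF s y] P_deriv[OF y] rho_at[OF y] w1 w2
        simp: algebra_simps)
  moreover have "(- (\<rho>1 y * W s y * w s y + \<rho> y * w s y * w s y + \<rho> y * W s y * wy s y)
       - U s * (\<rho> y * w s y + y * \<rho>1 y * w s y + y * \<rho> y * wy s y)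
       + (\<rho> y * V s y + P y * (- w s y)) + (\<rho>1 y * wy s y + \<rho> y * wyy s y)) = \<rho> y * wt s y - rem s y"
    unfolding wt_eq[OF s y] rem_def by (simp add: algebra_simps power2_eq_square)
  ultimately show ?thesis by simp
qed

lemma rem_cont: assumes s: "s \<in> {0<..<T}" and a: "a > 0"
  shows "continuous_on {a..b} (rem s)" "continuous_on {a..b} (\<lambda>y. \<rho> y * wt s y)"
proof -
  have "isCont (rem s) y" if "y \<in> {a..b}" for y
  proof -
    have y: "y > 0" using that a by auto
    note c = isCont_parts[OF s y]
    show ?thesis unfolding rem_def[abs_def] using c by (intro continuous_intros) auto
  qed
  then show "continuous_on {a..b} (rem s)" by (intro continuous_at_imp_continuous_on) auto
  have "isCont (\<lambda>y. \<rho> y * wt s y) y" if "y \<in> {a..b}" for y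
  proof -
    have y: "y > 0" using that a by auto
    note c = isCont_parts[OF s y]
    show ?thesis using c by (intro continuous_intros) auto
  qed
  then show "continuous_on {a..b} (\<lambda>y. \<rho> y * wt s y)" by (intro continuous_at_imp_continuous_on) auto
qed

lemma Dn_eq: assumes s: "s \<in> {0<..<T}" and a: "0 < a" "a \<le> b"
  shows "integral {a..b} (\<lambda>y. \<rho> y * wt s y) = D0 s b - D0 s a + integral {a..b} (rem s)"
proof -
  have "((\<lambda>y. \<rho> y * wt s y - rem s y) has_integral (D0 s b - D0 s a)) {a..b}"
    by (rule fundamental_theorem_of_calculus[OF a(2)])
       (use D0_deriv[OF s] a in \<open>auto simp flip: has_real_derivative_iff_has_vector_derivative
          intro: has_field_derivative_at_within\<close>)
  then have "integral {a..b} (\<lambda>y. \<rho> y * wt s y - rem s y) = D0 s b - D0 s a" by (rule integral_unique)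
  moreover have "integral {a..b} (\<lambda>y. \<rho> y * wt s y - rem s y) = integral {a..b} (\<lambda>y. \<rho> y * wt s y) - integral {a..b} (rem s)"
    by (rule integral_diff) (use rem_cont[OF s a(1)] in \<open>auto intro: integrable_continuous_interval\<close>)
  ultimately show ?thesis by simp
qed

lemma consts_nonneg: "Rb \<ge> 0" "R1 \<ge> 0" "K \<ge> 0"
proof -
  have "\<bar>U 0\<bar> \<le> K" "\<bar>\<rho> 0\<bar> \<le> Rb" "\<bar>\<rho>1 0\<bar> \<le> R1" using U_bd T_pos rho_bd rho1_bd by auto
  then show "Rb \<ge> 0" "R1 \<ge> 0" "K \<ge> 0" by linarith+
qed

lemma rem_bd: assumes s: "s \<in> {0<..<T}" and y: "y > 0"
  shows "\<bar>rem s y\<bar> \<le> (2*Rb*C*C + R1*C*C + K*(3*Rb+R1)*C + Rb*C + R1*C) * ((1+y)*exp(-y))"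
proof -
  define E where "E = exp (-y)"
  have E: "0 < E" "E \<le> 1" using y by (auto simp: E_def)
  have yE: "y * E \<le> (1+y)*E" "E \<le> (1+y)*E" using E y by (auto simp: algebra_simps)
  have w: "\<bar>w s y\<bar> \<le> C * E" using w_bd[OF s] y by (simp add: E_def)
  have wy: "\<bar>wy s y\<bar> \<le> C * E" using wy_bd[OF s y] by (simp add: E_def)
  have W: "\<bar>W s y\<bar> \<le> C" using W_bd[OF s] y by simp
  have U: "\<bar>U s\<bar> \<le> K" using U_bd s by auto
  have r: "\<bar>\<rho> y\<bar> \<le> Rb" "\<bar>\<rho>1 y\<bar> \<le> R1" using rho_bd rho1_bd y by auto
  have P: "\<bar>P y\<bar> \<le> Rb * y" using P_bd y by auto
  note cn = consts_nonneg C_nonneg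
  have t1: "\<bar>2 * \<rho> y * (w s y)\<^sup>2\<bar> \<le> 2*Rb*C*C * ((1+y)*E)"
  proof -
    have "\<bar>\<rho> y * (w s y * w s y)\<bar> \<le> Rb * (C*E*(C*E))" by (intro abs_mult_le r w)
    also have "\<dots> = Rb*C*C*(E*E)" by simp
    also have "\<dots> \<le> Rb*C*C*((1+y)*E)"
      using E yE cn by (intro mult_left_mono) (auto intro: order_trans[of _ E] mult_left_le)
    finally show ?thesis by (simp add: power2_eq_square abs_mult)
  qed
  have t2: "\<bar>\<rho>1 y * W s y * w s y\<bar> \<le> R1*C*C*((1+y)*E)"
  proof -
    have "\<bar>\<rho>1 y * W s y * w s y\<bar> \<le> R1 * C * (C*E)" by (intro abs_mult_le r w W)
    also have "\<dots> \<le> R1*C*C*((1+y)*E)" using mult_left_mono[OF yE(2), of "R1*C*C"] cn by (simp add: mult.assoc)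
    finally show ?thesis .
  qed
  have t3: "\<bar>U s * (3 * \<rho> y + y * \<rho>1 y) * w s y\<bar> \<le> K*(3*Rb+R1)*C*((1+y)*E)"
  proof -
    have "\<bar>3 * \<rho> y + y * \<rho>1 y\<bar> \<le> 3*Rb + y*R1"
      using r y by (smt (verit) abs_mult_le abs_of_pos)
    then have "\<bar>U s * (3 * \<rho> y + y * \<rho>1 y) * w s y\<bar> \<le> K * (3*Rb + y*R1) * (C*E)" by (intro abs_mult_le U w)
    also have "\<dots> = K*C*(3*Rb*E + R1*(y*E))" by (simp add: algebra_simps)
    also have "\<dots> \<le> K*C*(3*Rb*((1+y)*E) + R1*((1+y)*E))"
      using yE cn by (intro mult_left_mono add_mono) auto
    finally show ?thesis by (simp add: algebra_simps)
  qed
  have t4: "\<bar>P y * w s y\<bar> \<le> Rb*C*((1+y)*E)"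
  proof -
    have "\<bar>P y * w s y\<bar> \<le> Rb * y * (C*E)" by (intro abs_mult_le P w)
    also have "\<dots> = Rb*C*(y*E)" by simp
    also have "\<dots> \<le> Rb*C*((1+y)*E)" using yE cn by (intro mult_left_mono) auto
    finally show ?thesis .
  qed
  have t5: "\<bar>\<rho>1 y * wy s y\<bar> \<le> R1*C*((1+y)*E)"
  proof -
    have "\<bar>\<rho>1 y * wy s y\<bar> \<le> R1 * (C*E)" by (intro abs_mult_le r wy)
    also have "\<dots> \<le> R1*C*((1+y)*E)" using mult_left_mono[OF yE(2), of "R1*C"] cn by (simp add: mult.assoc)
    finally show ?thesis .
  qed
  have "\<bar>rem s y\<bar> \<le> 2*Rb*C*C*((1+y)*E) + R1*C*C*((1+y)*E) + K*(3*Rb+R1)*C*((1+y)*E) + Rb*C*((1+y)*E) + R1*C*((1+y)*E)"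
    unfolding rem_def using t1 t2 t3 t4 t5 by linarith
  then show ?thesis by (simp add: E_def algebra_simps)
qed

lemma D0_bd_inf: assumes s: "s \<in> {0<..<T}" and y: "y > 0"
  shows "\<bar>D0 s y\<bar> \<le> (Rb*C*C + K*Rb*C + Rb*C + Rb*C) * ((1+y)*exp(-y))"
proof -
  define E where "E = exp (-y)"
  have E: "0 < E" "E \<le> 1" using y by (auto simp: E_def)
  have yE: "y * E \<le> (1+y)*E" "E \<le> (1+y)*E" using E y by (auto simp: algebra_simps)
  have w: "\<bar>w s y\<bar> \<le> C * E" using w_bd[OF s] y by (simp add: E_def)
  have wy: "\<bar>wy s y\<bar> \<le> C * E" using wy_bd[OF s y] by (simp add: E_def)
  have W: "\<bar>W s y\<bar> \<le> C" using W_bd[OF s] y by simp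
  have V: "\<bar>V s y\<bar> \<le> C * E" using V_bd[OF s] y by (simp add: E_def)
  have U: "\<bar>U s\<bar> \<le> K" using U_bd s by auto
  have r: "\<bar>\<rho> y\<bar> \<le> Rb" using rho_bd y by auto
  have P: "\<bar>P y\<bar> \<le> Rb * y" using P_bd y by auto
  have yy: "\<bar>y\<bar> \<le> y" using y by simp
  note cn = consts_nonneg C_nonneg
  have t1: "\<bar>\<rho> y * W s y * w s y\<bar> \<le> Rb*C*C*((1+y)*E)"
  proof -
    have "\<bar>\<rho> y * W s y * w s y\<bar> \<le> Rb * C * (C*E)" by (intro abs_mult_le r w W)
    also have "\<dots> \<le> Rb*C*C*((1+y)*E)" using mult_left_mono[OF yE(2), of "Rb*C*C"] cn by (simp add: mult.assoc)
    finally show ?thesis .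
  qed
  have t2: "\<bar>U s * y * \<rho> y * w s y\<bar> \<le> K*Rb*C*((1+y)*E)"
  proof -
    have "\<bar>U s * y * \<rho> y * w s y\<bar> \<le> K * y * Rb * (C*E)" by (intro abs_mult_le r w U yy)
    also have "\<dots> = K*Rb*C*(y*E)" by simp
    also have "\<dots> \<le> K*Rb*C*((1+y)*E)" using yE cn by (intro mult_left_mono) auto
    finally show ?thesis .
  qed
  have t3: "\<bar>P y * V s y\<bar> \<le> Rb*C*((1+y)*E)"
  proof -
    have "\<bar>P y * V s y\<bar> \<le> Rb * y * (C*E)" by (intro abs_mult_le P V)
    also have "\<dots> = Rb*C*(y*E)" by simp
    also have "\<dots> \<le> Rb*C*((1+y)*E)" using yE cn by (intro mult_left_mono) auto
    finally show ?thesis .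
  qed
  have t4: "\<bar>\<rho> y * wy s y\<bar> \<le> Rb*C*((1+y)*E)"
  proof -
    have "\<bar>\<rho> y * wy s y\<bar> \<le> Rb * (C*E)" by (intro abs_mult_le r wy)
    also have "\<dots> \<le> Rb*C*((1+y)*E)" using mult_left_mono[OF yE(2), of "Rb*C"] cn by (simp add: mult.assoc)
    finally show ?thesis .
  qed
  have "\<bar>D0 s y\<bar> \<le> Rb*C*C*((1+y)*E) + K*Rb*C*((1+y)*E) + Rb*C*((1+y)*E) + Rb*C*((1+y)*E)"
    unfolding D0_def using t1 t2 t3 t4 by linarith
  then show ?thesis by (simp add: E_def algebra_simps)
qed

lemma D0_bd_0: assumes s: "s \<in> {0<..<T}" and y: "y > 0"
  shows "\<bar>D0 s y\<bar> \<le> (C*C + K*Rb*C + Rb*C + C) * (\<bar>\<rho> y\<bar> + y)"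
proof -
  define E where "E = exp (-y)"
  have E: "0 < E" "E \<le> 1" using y by (auto simp: E_def)
  note cn = consts_nonneg C_nonneg
  have w: "\<bar>w s y\<bar> \<le> C" using w_bd[OF s] y E cn by (smt (verit) E_def mult_left_le)
  have wy: "\<bar>wy s y\<bar> \<le> C" using wy_bd[OF s y] E cn by (smt (verit) E_def mult_left_le)
  have W: "\<bar>W s y\<bar> \<le> C" using W_bd[OF s] y by simp
  have V: "\<bar>V s y\<bar> \<le> C" using V_bd[OF s] y E cn by (smt (verit) E_def mult_left_le)
  have U: "\<bar>U s\<bar> \<le> K" using U_bd s by auto
  have r: "\<bar>\<rho> y\<bar> \<le> Rb" using rho_bd y by auto
  have P: "\<bar>P y\<bar> \<le> Rb * y" using P_bd y by auto
  have yy: "\<bar>y\<bar> \<le> y" using y by simp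
  have rr: "\<bar>\<rho> y\<bar> \<le> \<bar>\<rho> y\<bar>" by simp
  have t1: "\<bar>\<rho> y * W s y * w s y\<bar> \<le> \<bar>\<rho> y\<bar>*C*C" by (intro abs_mult_le rr w W)
  have t2: "\<bar>U s * y * \<rho> y * w s y\<bar> \<le> K*y*Rb*C" by (intro abs_mult_le r w U yy)
  have t3: "\<bar>P y * V s y\<bar> \<le> Rb*y*C" by (intro abs_mult_le P V)
  have t4: "\<bar>\<rho> y * wy s y\<bar> \<le> \<bar>\<rho> y\<bar>*C" by (intro abs_mult_le rr wy)
  have "\<bar>D0 s y\<bar> \<le> \<bar>\<rho> y\<bar>*C*C + K*y*Rb*C + Rb*y*C + \<bar>\<rho> y\<bar>*C"
    unfolding D0_def using t1 t2 t3 t4 by linarith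
  also have "\<dots> \<le> (C*C + K*Rb*C + Rb*C + C) * (\<bar>\<rho> y\<bar> + y)"
    using cn y by (simp add: algebra_simps mult_nonneg_nonneg)
  finally show ?thesis .
qed

definition "K1 = 2*Rb*C*C + R1*C*C + K*(3*Rb+R1)*C + Rb*C + R1*C"
definition "K2 = Rb*C*C + K*Rb*C + Rb*C + Rb*C"
definition "K3 = C*C + K*Rb*C + Rb*C + C"

lemma K_nonneg: "K1 \<ge> 0" "K2 \<ge> 0" "K3 \<ge> 0"
  using consts_nonneg C_nonneg by (auto simp: K1_def K2_def K3_def)

lemma rem_int: assumes s: "s \<in> {0<..<T}" and a: "0 < a" shows "rem s integrable_on {a..b}"
  using rem_cont(1)[OF s a] by (rule integrable_continuous_interval)

lemma rem_int_bd: assumes s: "s \<in> {0<..<T}" and a: "0 < a" "a \<le> b"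
  shows "\<bar>integral {a..b} (rem s)\<bar> \<le> K1 * (b - a)" "\<bar>integral {a..b} (rem s)\<bar> \<le> K1 * ((2+a)*exp(-a))"
proof -
  have bd: "\<bar>rem s y\<bar> \<le> K1 * ((1+y)*exp(-y))" if "y \<in> {a..b}" for y
    using rem_bd[OF s, of y] that a by (auto simp: K1_def)
  have le1: "(1+y)*exp(-y) \<le> 1" for y :: real
    using exp_ge_add_one_self[of y] by (simp add: exp_minus field_simps)
  have "\<bar>integral {a..b} (rem s)\<bar> \<le> integral {a..b} (\<lambda>y. K1)"
  proof (rule integral_abs_le[OF rem_int[OF s a(1)]])
    show "\<bar>rem s x\<bar> \<le> K1" if "x \<in> {a..b}" for x
      using bd[OF that] mult_left_mono[OF le1[of x] K_nonneg(1)] by simp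
  qed auto
  then show "\<bar>integral {a..b} (rem s)\<bar> \<le> K1 * (b - a)" using a by (simp add: mult.commute)
  have I: "((\<lambda>y. K1 * ((1+y)*exp(-y))) has_integral K1 * ((2+a)*exp(-a) - (2+b)*exp(-b))) {a..b}"
    by (rule has_integral_mult_right[OF exp_lin_has_integral[OF a(2)]])
  have "\<bar>integral {a..b} (rem s)\<bar> \<le> integral {a..b} (\<lambda>y. K1 * ((1+y)*exp(-y)))"
    by (rule integral_abs_le[OF rem_int[OF s a(1)]]) (use I bd in auto)
  also have "\<dots> = K1 * ((2+a)*exp(-a) - (2+b)*exp(-b))" using I by (rule integral_unique)
  also have "\<dots> \<le> K1 * ((2+a)*exp(-a))"
    using K_nonneg a by (intro mult_left_mono) auto
  finally show "\<bar>integral {a..b} (rem s)\<bar> \<le> K1 * ((2+a)*exp(-a))" .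
qed

definition "Dn n s = integral {en n..Rn n} (\<lambda>y. \<rho> y * wt s y)"

lemma Dn_cauchy: assumes d: "d > 0"
  shows "\<exists>N. \<forall>n\<ge>N. \<forall>m\<ge>n. \<forall>s\<in>{0<..<T}. \<bar>Dn m s - Dn n s\<bar> \<le> d"
proof -
  have l1: "(\<lambda>n. K2 * ((1 + Rn n) * exp(- Rn n))) \<longlonglongrightarrow> K2 * 0"
    by (intro tendsto_intros lim_exp_seq)
  have l2: "(\<lambda>n. K1 * ((2 + Rn n) * exp(- Rn n))) \<longlonglongrightarrow> K1 * 0"
    by (intro tendsto_intros lim_exp_seq)
  have l3: "(\<lambda>n. K1 * en n) \<longlonglongrightarrow> K1 * 0"
    by (intro tendsto_intros en_lim)
  have "(\<lambda>n. \<rho> (en n)) \<longlonglongrightarrow> \<rho> 0"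
    by (rule continuous_on_tendsto_compose[OF rho_cont en_lim]) (use en_Rn(1) in \<open>auto intro!: always_eventually less_imp_le\<close>)
  then have l4: "(\<lambda>n. K3 * (\<bar>\<rho> (en n)\<bar> + en n)) \<longlonglongrightarrow> K3 * (\<bar>0\<bar> + 0)"
    using rho0 by (intro tendsto_intros en_lim) auto
  have d6: "d/6 > 0" using d by simp
  have "\<forall>\<^sub>F n in sequentially. K2 * ((1 + Rn n) * exp(- Rn n)) < d/6 \<and> K1 * ((2 + Rn n) * exp(- Rn n)) < d/6
      \<and> K1 * en n < d/6 \<and> K3 * (\<bar>\<rho> (en n)\<bar> + en n) < d/6"
    by (intro eventually_conj order_tendstoD(2)[OF l1] order_tendstoD(2)[OF l2]
      order_tendstoD(2)[OF l3] order_tendstoD(2)[OF l4]) (use d6 in auto)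
  then obtain N where N: "\<And>n. n \<ge> N \<Longrightarrow> K2 * ((1 + Rn n) * exp(- Rn n)) < d/6 \<and> K1 * ((2 + Rn n) * exp(- Rn n)) < d/6
      \<and> K1 * en n < d/6 \<and> K3 * (\<bar>\<rho> (en n)\<bar> + en n) < d/6"
    unfolding eventually_sequentially by blast
  have "\<bar>Dn m s - Dn n s\<bar> \<le> d" if nm: "n \<ge> N" "m \<ge> n" and s: "s \<in> {0<..<T}" for n m s
  proof -
    note E = en_Rn[of n] en_Rn[of m] en_Rn(4,5)[OF nm(2)]
    have Nn: "K2 * ((1 + Rn n) * exp(- Rn n)) < d/6" "K1 * ((2 + Rn n) * exp(- Rn n)) < d/6"
      "K1 * en n < d/6" "K3 * (\<bar>\<rho> (en n)\<bar> + en n) < d/6" using N nm by auto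
    have Nm: "K2 * ((1 + Rn m) * exp(- Rn m)) < d/6" "K3 * (\<bar>\<rho> (en m)\<bar> + en m) < d/6" using N nm by auto
    have em: "Dn m s = D0 s (Rn m) - D0 s (en m) + integral {en m..Rn m} (rem s)"
      unfolding Dn_def using Dn_eq[OF s] E by (auto intro: order_trans)
    have en: "Dn n s = D0 s (Rn n) - D0 s (en n) + integral {en n..Rn n} (rem s)"
      unfolding Dn_def using Dn_eq[OF s] E by (auto intro: order_trans)
    have o1: "en m \<le> Rn n" "en n \<le> Rn n" using E by linarith+
    have c1: "integral {en m..Rn m} (rem s) = integral {en m..Rn n} (rem s) + integral {Rn n..Rn m} (rem s)"
      using Henstock_Kurzweil_Integration.integral_combine[where a="en m" and c="Rn n" and b="Rn m" and f="rem s"] E o1 rem_int[OF s, of "en m" "Rn m"] by auto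
    have c2: "integral {en m..Rn n} (rem s) = integral {en m..en n} (rem s) + integral {en n..Rn n} (rem s)"
      using Henstock_Kurzweil_Integration.integral_combine[where a="en m" and c="en n" and b="Rn n" and f="rem s"] E o1 rem_int[OF s, of "en m" "Rn n"] by auto
    have b1: "\<bar>D0 s (Rn n)\<bar> \<le> K2 * ((1 + Rn n) * exp(- Rn n))"
      using D0_bd_inf[OF s, of "Rn n"] E by (simp add: K2_def)
    have b2: "\<bar>D0 s (Rn m)\<bar> \<le> K2 * ((1 + Rn m) * exp(- Rn m))"
      using D0_bd_inf[OF s, of "Rn m"] E by (simp add: K2_def)
    have b3: "\<bar>D0 s (en n)\<bar> \<le> K3 * (\<bar>\<rho> (en n)\<bar> + en n)"
      using D0_bd_0[OF s, of "en n"] E by (simp add: K3_def)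
    have b4: "\<bar>D0 s (en m)\<bar> \<le> K3 * (\<bar>\<rho> (en m)\<bar> + en m)"
      using D0_bd_0[OF s, of "en m"] E by (simp add: K3_def)
    have b5: "\<bar>integral {en m..en n} (rem s)\<bar> \<le> K1 * (en n - en m)"
      using rem_int_bd(1)[OF s, of "en m" "en n"] E by simp
    have b5': "K1 * (en n - en m) \<le> K1 * en n" using K_nonneg E by (simp add: mult_left_mono)
    have b6: "\<bar>integral {Rn n..Rn m} (rem s)\<bar> \<le> K1 * ((2 + Rn n) * exp(- Rn n))"
      using rem_int_bd(2)[OF s, of "Rn n" "Rn m"] E by simp
    show ?thesis using em en c1 c2 b1 b2 b3 b4 b5 b5' b6 Nn Nm by linarith
  qed
  then show ?thesis by blast
qed

definition "Elim s = lim (\<lambda>n. Dn n s)"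

lemma Dn_unif: assumes d: "d > 0"
  shows "\<exists>N. \<forall>n\<ge>N. \<forall>s\<in>{0<..<T}. \<bar>Dn n s - Elim s\<bar> \<le> d"
proof -
  have conv: "(\<lambda>n. Dn n s) \<longlonglongrightarrow> Elim s" if s: "s \<in> {0<..<T}" for s
  proof -
    have "Cauchy (\<lambda>n. Dn n s)"
    proof (rule metric_CauchyI)
      fix e :: real assume e: "e > 0"
      obtain N where N: "\<forall>n\<ge>N. \<forall>m\<ge>n. \<forall>s\<in>{0<..<T}. \<bar>Dn m s - Dn n s\<bar> \<le> e/2"
        using Dn_cauchy[of "e/2"] e by auto
      have "dist (Dn m s) (Dn n s) < e" if "m \<ge> N" "n \<ge> N" for m n
      proof (cases "m \<ge> n")
        case True then show ?thesis using N that s e by (force simp: dist_real_def)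
      next
        case False then show ?thesis using N[rule_format, of m n s] that s e by (simp add: dist_real_def abs_minus_commute)
      qed
      then show "\<exists>M. \<forall>m\<ge>M. \<forall>n\<ge>M. dist (Dn m s) (Dn n s) < e" by blast
    qed
    then show ?thesis unfolding Elim_def by (simp add: Cauchy_convergent_iff convergent_LIMSEQ_iff)
  qed
  obtain N where N: "\<forall>n\<ge>N. \<forall>m\<ge>n. \<forall>s\<in>{0<..<T}. \<bar>Dn m s - Dn n s\<bar> \<le> d"
    using Dn_cauchy[OF d] by auto
  have "\<bar>Dn n s - Elim s\<bar> \<le> d" if n: "n \<ge> N" and s: "s \<in> {0<..<T}" for n s
  proof (rule tendsto_upperbound)
    show "(\<lambda>m. \<bar>Dn n s - Dn m s\<bar>) \<longlonglongrightarrow> \<bar>Dn n s - Elim s\<bar>"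
      by (intro tendsto_intros conv s)
    show "\<forall>\<^sub>F m in sequentially. \<bar>Dn n s - Dn m s\<bar> \<le> d"
      unfolding eventually_sequentially using N n s by (intro exI[of _ n]) (auto simp: abs_minus_commute)
  qed simp
  then show ?thesis by blast
qed

definition "Gn n s = integral {en n..Rn n} (\<lambda>y. \<rho> y * w s y)"
definition "G s = integral {0..} (\<lambda>y. \<rho> y * w s y)"

lemma Gn_deriv: assumes S: "S \<subseteq> {0<..<T}" "convex S" and s: "s \<in> S"
  shows "(Gn n has_real_derivative Dn n s) (at s within S)"
proof -
  have fx: "((\<lambda>s. \<rho> y * w s y) has_field_derivative \<rho> y * wt s y) (at s within S)"
    if "s \<in> S" "y \<in> cbox (en n) (Rn n)" for s y
  proof -
    have "y > 0" using that en_Rn(1)[of n] by auto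
    then have "((\<lambda>s. w s y) has_real_derivative wt s y) (at s)" using wt_deriv that S by auto
    then show ?thesis by (auto intro!: derivative_eq_intros intro: has_field_derivative_at_within)
  qed
  have int: "(\<lambda>y. \<rho> y * w s y) integrable_on cbox (en n) (Rn n)" if "s \<in> S" for s
  proof -
    have "continuous_on {en n..Rn n} (\<lambda>y. \<rho> y * w s y)"
      using continuous_on_subset[OF rho_cont] w_cont_ab[of s "en n" "Rn n"] that S en_Rn(1)[of n]
      by (intro continuous_intros) auto
    then show ?thesis by (simp add: integrable_continuous_interval)
  qed
  have cont: "continuous_on (S \<times> cbox (en n) (Rn n)) (\<lambda>(s, y). \<rho> y * wt s y)"
  proof -
    have "continuous_on (S \<times> {en n..Rn n}) (\<lambda>p. wt (fst p) (snd p))"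
      by (rule continuous_on_subset[OF wt_cont]) (use S en_Rn(1)[of n] in auto)
    moreover have "continuous_on (S \<times> {en n..Rn n}) (\<lambda>p. \<rho> (snd p))"
      by (rule continuous_on_compose2[OF rho_cont continuous_on_snd]) (use en_Rn(1)[of n] in auto)
    ultimately have "continuous_on (S \<times> {en n..Rn n}) (\<lambda>p. \<rho> (snd p) * wt (fst p) (snd p))"
      by (intro continuous_intros)
    then show ?thesis by (simp add: split_beta)
  qed
  show ?thesis
    using leibniz_rule_field_derivative[OF fx int cont s S(2)] unfolding Gn_def Dn_def by simp
qed

lemma G_lim: assumes s: "s \<in> {0<..<T}" shows "(\<lambda>n. Gn n s) \<longlonglongrightarrow> G s"
  unfolding Gn_def G_def
proof (rule trunc_lim[where h="\<lambda>y. Rb * C * exp (-y)"])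
  show "continuous_on {0..} (\<lambda>y. \<rho> y * w s y)" using rho_cont w_cont_s[OF s] by (intro continuous_intros)
  show "(\<lambda>y. Rb * C * exp (-y)) integrable_on {0..}"
    using integrable_cmul[OF integrable_on_exp_minus_to_infinity[of 1 0], of "Rb*C"] by simp
  show "\<bar>\<rho> y * w s y\<bar> \<le> Rb * C * exp (-y)" if "y \<ge> 0" for y
    using abs_mult_le[OF rho_bd[rule_format, OF that] w_bd[OF s that]] by (simp add: mult.assoc)
qed (simp add: rho0)

lemma G_has_deriv: assumes t: "t \<in> {0<..<T}" shows "(G has_real_derivative Elim t) (at t)"
proof -
  define a b where "a = t/2" and "b = (t+T)/2"
  have ab: "0 < a" "a < t" "t < b" "b < T" using t by (auto simp: a_def b_def)
  have S: "{a..b} \<subseteq> {0<..<T}" "convex {a..b}" using ab by auto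
  have "\<exists>g. \<forall>x\<in>{a..b}. (\<lambda>n. Gn n x) \<longlonglongrightarrow> g x \<and> (g has_derivative (\<lambda>h. Elim x * h)) (at x within {a..b})"
  proof (rule has_derivative_sequence[where f'="\<lambda>n x h. Dn n x * h"])
    show "convex {a..b}" by simp
    show "(Gn n has_derivative (\<lambda>h. Dn n x * h)) (at x within {a..b})" if "x \<in> {a..b}" for n x
      using Gn_deriv[OF S that, of n] unfolding has_field_derivative_def
      by (rule has_derivative_eq_rhs) (auto simp: fun_eq_iff mult.commute)
    show "\<forall>\<^sub>F n in sequentially. \<forall>x\<in>{a..b}. \<forall>h. norm (Dn n x * h - Elim x * h) \<le> e * norm h"
      if e: "e > 0" for e
    proof -
      obtain N where N: "\<forall>n\<ge>N. \<forall>s\<in>{0<..<T}. \<bar>Dn n s - Elim s\<bar> \<le> e" using Dn_unif[OF e] by auto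
      have "norm (Dn n x * h - Elim x * h) \<le> e * norm h" if "n \<ge> N" "x \<in> {a..b}" for n x h
      proof -
        have "norm (Dn n x * h - Elim x * h) = \<bar>Dn n x - Elim x\<bar> * \<bar>h\<bar>" by (simp add: abs_mult left_diff_distrib[symmetric])
        also have "\<dots> \<le> e * \<bar>h\<bar>" using N that S by (intro mult_right_mono) auto
        finally show ?thesis by simp
      qed
      then show ?thesis unfolding eventually_sequentially by blast
    qed
    show "t \<in> {a..b}" using ab by auto
    show "(\<lambda>n. Gn n t) \<longlonglongrightarrow> G t" by (rule G_lim[OF t])
  qed
  then obtain g where g: "\<And>x. x \<in> {a..b} \<Longrightarrow> (\<lambda>n. Gn n x) \<longlonglongrightarrow> g x"
    "\<And>x. x \<in> {a..b} \<Longrightarrow> (g has_derivative (\<lambda>h. Elim x * h)) (at x within {a..b})" by blast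
  have gG: "g x = G x" if "x \<in> {a..b}" for x
    using LIMSEQ_unique[OF g(1)[OF that] G_lim] that S by auto
  have "(g has_derivative (\<lambda>h. Elim t * h)) (at t)"
    using g(2)[of t] ab at_within_interior[of t "{a..b}"] by auto
  then have "(G has_derivative (\<lambda>h. Elim t * h)) (at t)"
    by (rule has_derivative_transform_within_open[where s="{a<..<b}"]) (use ab gG in auto)
  then show ?thesis unfolding has_field_derivative_def
    by (rule has_derivative_eq_rhs) (auto simp: fun_eq_iff mult.commute)
qed

lemma rho1_f: assumes y: "0 < y" "y < B" shows "\<rho>1 y = f1 y" "y \<noteq> A \<Longrightarrow> (\<rho>1 has_real_derivative f2 y) (at y)"
proof -
  have fd: "(f has_real_derivative f1 y) (at y)"
    by (rule deriv_at_from_within[where S="{0..B}" and T="{0<..<B}"]) (use f_deriv y in auto)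
  have "(f has_real_derivative \<rho>1 y) (at y)"
    by (rule has_field_derivative_transform_within_open[OF rho_at[OF y(1)], where S="{0<..<B}"]) (use rho_f y in auto)
  then show eq: "\<rho>1 y = f1 y" using DERIV_unique fd by blast
  assume yA: "y \<noteq> A"
  have "(f1 has_real_derivative f2 y) (at y)"
    by (rule deriv_at_from_within[where S="{0..B}" and T="{0<..<B}"]) (use f1_deriv y yA in auto)
  then show "(\<rho>1 has_real_derivative f2 y) (at y)"
  proof (rule has_field_derivative_transform_within_open[where S="{0<..<B}"])
    show "f1 x = \<rho>1 x" if "x \<in> {0<..<B}" for x
    proof -
      have fd: "(f has_real_derivative f1 x) (at x)"
        by (rule deriv_at_from_within[where S="{0..B}" and T="{0<..<B}"]) (use f_deriv that in auto)
      have "(f has_real_derivative \<rho>1 x) (at x)"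
        by (rule has_field_derivative_transform_within_open[OF rho_at, where S="{0<..<B}"]) (use rho_f that in auto)
      then show ?thesis using DERIV_unique fd by metis
    qed
  qed (use y in auto)
qed

lemma g1_at: "y > M0 \<Longrightarrow> (g1 has_real_derivative g2 y) (at y)"
  by (rule deriv_at_from_within[where S="{M0..}" and T="{M0<..}"]) (use g1_deriv in auto)

lemma g_at: "y > M0 \<Longrightarrow> (g has_real_derivative g1 y) (at y)"
  by (rule deriv_at_from_within[where S="{M0..}" and T="{M0<..}"]) (use g_deriv in auto)

lemma rho1_g: assumes y: "y > B" shows "\<rho>1 y = g1 y" "(\<rho>1 has_real_derivative g2 y) (at y)"
proof -
  have eqx: "\<rho>1 x = g1 x" if "x > B" for x
  proof -
    have "(g has_real_derivative \<rho>1 x) (at x)"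
      by (rule has_field_derivative_transform_within_open[OF rho_at, where S="{B<..}"]) (use rho_g that ABM in auto)
    then show ?thesis using DERIV_unique g_at[of x] that ABM by force
  qed
  then show "\<rho>1 y = g1 y" using y .
  show "(\<rho>1 has_real_derivative g2 y) (at y)"
    by (rule has_field_derivative_transform_within_open[OF g1_at, where S="{B<..}"]) (use eqx y ABM in auto)
qed

lemma g1_cont: "continuous_on {M0..} g1"
  unfolding continuous_on_eq_continuous_within
  using g1_deriv DERIV_continuous by blast

lemma eta_M0: "\<eta> M0 = 0"
proof -
  have "(\<eta> \<longlongrightarrow> \<eta> M0) (at_left M0)"
    using DERIV_isCont[OF eta_deriv[rule_format]] by (simp add: isCont_def filterlim_at_split)
  moreover have "(\<eta> \<longlongrightarrow> 0) (at_left M0)"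
  proof (rule tendsto_eventually)
    show "\<forall>\<^sub>F x in at_left M0. \<eta> x = 0"
      using eventually_at_left_real[of "M0 - 1" M0] eventually_mono by (force simp: eta0)
  qed
  ultimately show ?thesis using tendsto_unique[of "at_left M0"] by (metis trivial_limit_at_left_real)
qed

lemma eta_nonneg: "\<eta> y \<ge> 0"
proof (cases "y < M0")
  case True then show ?thesis using eta0 by auto
next
  case False
  have "\<eta> (M0 - 1) \<le> \<eta> y"
    by (rule DERIV_nonneg_imp_nondecreasing[of "M0 - 1" y]) (use False eta_deriv eta1_bd in auto)
  then show ?thesis using eta0 by auto
qed

lemma eta1_B: assumes "y > B" shows "\<eta>1 y = 0"
proof -
  have "((\<lambda>x. 1) has_real_derivative \<eta>1 y) (at y)"
    by (rule has_field_derivative_transform_within_open[OF eta_deriv[rule_format], where S="{B<..}"])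
       (use eta1 assms in auto)
  then show ?thesis using DERIV_unique[OF _ DERIV_const] by blast
qed

definition "Df s y = D0 s y + \<rho>1 y * (W s y)\<^sup>2 / 2 - \<rho>1 y * w s y"
definition "jf lam s y = 2 * (1 - \<beta>) * (2 * lam * \<rho> y * w s y - lam\<^sup>2 * \<rho> y) - K * (3 + Cf) * \<rho> y * w s y"

lemma Df_deriv: assumes s: "s \<in> {0<..<T}" and y: "y > 0" and r2: "(\<rho>1 has_real_derivative r2) (at y)"
  shows "(Df s has_real_derivative (\<rho> y * wt s y - rem s y + r2 * (W s y)\<^sup>2 / 2 + \<rho>1 y * W s y * w s y
      - r2 * w s y - \<rho>1 y * wy s y)) (at y)"
proof -
  have w1: "(w s has_real_derivative wy s y) (at y)" using wy_deriv s y by auto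
  show ?thesis
    unfolding Df_def[abs_def]
    by (auto intro!: derivative_eq_intros D0_deriv[OF s y] W_deriv[OF s y] r2 w1
        simp: algebra_simps power2_eq_square)
qed

lemma Q_deriv: assumes s: "s \<in> {0<..<T}" and y: "y > M0"
  shows "((\<lambda>y. \<eta> y * g1 y * (W s y)\<^sup>2) has_real_derivative
     (\<eta>1 y * g1 y * (W s y)\<^sup>2 + \<eta> y * g2 y * (W s y)\<^sup>2 + 2 * \<eta> y * g1 y * W s y * w s y)) (at y)"
proof -
  have y0: "y > 0" using y ABM by auto
  show ?thesis
    by (auto intro!: derivative_eq_intros W_deriv[OF s y0] g1_at[OF y] eta_deriv[rule_format]
        simp: algebra_simps power2_eq_square)
qed

lemma Df_cont: assumes s: "s \<in> {0<..<T}" and a: "a > 0" shows "continuous_on {a..b} (Df s)"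
proof -
  have "isCont (Df s) y" if "y \<in> {a..b}" for y
  proof -
    have y: "y > 0" using that a by auto
    note c = isCont_parts[OF s y]
    show ?thesis unfolding Df_def[abs_def] D0_def using c by (intro continuous_intros) auto
  qed
  then show ?thesis by (intro continuous_at_imp_continuous_on) auto
qed

lemma jf_cont: assumes s: "s \<in> {0<..<T}" and a: "a \<ge> 0" shows "continuous_on {a..b} (jf lam s)"
  unfolding jf_def[abs_def]
  using continuous_on_subset[OF rho_cont, of "{a..b}"] w_cont_ab[OF s a, of b] a
  by (intro continuous_intros) auto

lemma P_f: assumes "0 \<le> y" "y \<le> B" shows "P y = integral {0..y} f"
  unfolding P_def by (rule integral_cong) (use rho_f assms in auto)

lemma key_ineq: assumes t: "t \<in> {0<..<T}" and e: "0 < e" "e < A" and R: "B < R"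
  shows "integral {e..R} (\<lambda>y. \<rho> y * wt t y) \<ge> integral {e..R} (jf lam t) + Df t R - Df t e"
proof -
  define I where "I y = integral {e..y} (\<lambda>y. \<rho> y * wt t y)" for y
  define J where "J y = integral {e..y} (jf lam t)" for y
  define Q where "Q y = \<eta> y * g1 y * (W t y)\<^sup>2" for y
  define Psi where "Psi y = I y - J y - Df t y" for y
  have eR: "e < R" using e R ABM by linarith
  have cI: "continuous_on {e..R} (\<lambda>y. \<rho> y * wt t y)" using rem_cont(2)[OF t e(1)] .
  have cJ: "continuous_on {e..R} (jf lam t)" using jf_cont[OF t] e by auto
  have wI: "(I has_real_derivative \<rho> x * wt t x) (at x within {e..R})" if "x \<in> {e..R}" for x
    unfolding I_def by (rule integral_has_real_derivative[OF cI that])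
  have wJ: "(J has_real_derivative jf lam t x) (at x within {e..R})" if "x \<in> {e..R}" for x
    unfolding J_def by (rule integral_has_real_derivative[OF cJ that])
  have contI: "continuous_on {e..R} I"
    unfolding continuous_on_eq_continuous_within using wI DERIV_continuous by blast
  have contJ: "continuous_on {e..R} J"
    unfolding continuous_on_eq_continuous_within using wJ DERIV_continuous by blast
  have contPsi: "continuous_on {e..R} Psi"
    unfolding Psi_def[abs_def] using contI contJ Df_cont[OF t e(1)] by (intro continuous_intros)
  have contQ: "continuous_on {M0..R} Q"
  proof -
    have "continuous_on {M0..R} \<eta>"
      using eta_deriv DERIV_isCont by (intro continuous_at_imp_continuous_on) blast
    moreover have "continuous_on {M0..R} g1" using continuous_on_subset[OF g1_cont] by auto
    moreover have "continuous_on {M0..R} (W t)"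
      using isCont_parts(3)[OF t] ABM by (intro continuous_at_imp_continuous_on) auto
    ultimately show ?thesis unfolding Q_def[abs_def] by (intro continuous_intros)
  qed
  have dPsi: "(Psi has_real_derivative (2 * \<rho> x * (w t x)\<^sup>2 + U t * (3 * \<rho> x + x * \<rho>1 x) * w t x + P x * w t x
      + r2 * w t x - r2 * (W t x)\<^sup>2 / 2 - jf lam t x)) (at x)"
    if x: "e < x" "x < R" and r2: "(\<rho>1 has_real_derivative r2) (at x)" for x r2
  proof -
    have x0: "x > 0" using x e by auto
    have dI: "(I has_real_derivative \<rho> x * wt t x) (at x)"
      by (rule deriv_at_from_within[OF wI, where T="{e<..<R}"]) (use x in auto)
    have dJ: "(J has_real_derivative jf lam t x) (at x)"
      by (rule deriv_at_from_within[OF wJ, where T="{e<..<R}"]) (use x in auto)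
    have "(Psi has_real_derivative (\<rho> x * wt t x - jf lam t x - (\<rho> x * wt t x - rem t x + r2 * (W t x)\<^sup>2 / 2 + \<rho>1 x * W t x * w t x
      - r2 * w t x - \<rho>1 x * wy t x))) (at x)"
      unfolding Psi_def[abs_def] by (intro derivative_intros dI dJ Df_deriv[OF t x0 r2])
    then show ?thesis by (simp add: rem_def algebra_simps)
  qed
  have Ut: "U t \<le> 0" "\<bar>U t\<bar> \<le> K" using U_nonpos U_bd t by auto
  have beta: "\<beta> > 0" "\<beta> < 1" using beta_pos beta_lt .
  have lo: "\<exists>d. (Psi has_real_derivative d) (at x) \<and> d \<ge> 0" if x: "e < x" "x < M0" "x \<noteq> A" for x
  proof -
    have x0: "0 < x" "x < B" "x < R" using x e ABM R by auto
    have xB: "x \<in> {0..B} - {A}" using x0 x by auto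
    have r: "\<rho>1 x = f1 x" and r2: "(\<rho>1 has_real_derivative f2 x) (at x)" using rho1_f[OF x0(1,2)] x by auto
    have h1: "\<rho> x \<ge> 0" "w t x \<ge> 0" using rho_nonneg w_nonneg t x0 by auto
    have hyp: "\<rho> x \<ge> 0" "w t x \<ge> 0" "x * \<rho>1 x \<le> Cf * \<rho> x" "f2 x \<le> 0" "P x + f2 x \<ge> 0"
      using h1 F2 rho_f r F4 F3 P_f xB by auto
    show ?thesis
      using dPsi[OF x(1) x0(3) r2] pw_lo[OF hyp(1,2) Ut hyp(3) Cf_pos beta hyp(4,5), of "W t x" lam]
      unfolding jf_def by blast
  qed
  have s1: "Psi e \<le> Psi A"
    by (rule DERIV_nonneg_imp_increasing_open[where f=Psi]) (use e ABM lo R in \<open>auto intro: continuous_on_subset[OF contPsi]\<close>)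
  have s2: "Psi A \<le> Psi M0"
    by (rule DERIV_nonneg_imp_increasing_open[where f=Psi]) (use e ABM lo R in \<open>auto intro: continuous_on_subset[OF contPsi]\<close>)
  have hi: "\<exists>d. ((\<lambda>y. Psi y + Q y) has_real_derivative d) (at x) \<and> d \<ge> 0"
    if x: "M0 < x" "x < R" "x \<noteq> B" for x
  proof -
    have x0: "0 < x" "e < x" using x e ABM by auto
    have dQ: "(Q has_real_derivative (\<eta>1 x * g1 x * (W t x)\<^sup>2 + \<eta> x * g2 x * (W t x)\<^sup>2 + 2 * \<eta> x * g1 x * W t x * w t x)) (at x)"
      unfolding Q_def using Q_deriv[OF t x(1)] .
    have g2: "g2 x > 0" "g1 x < 0" using G2 x by auto
    have common: "\<rho> x \<ge> 0" "w t x \<ge> 0" "P x \<ge> 0" using rho_nonneg w_nonneg t x0 P_bd by auto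
    show ?thesis
    proof (cases "x < B")
      case True
      have xB: "x \<in> {0..B} - {A}" "x \<in> {M0..B}" using x0 True x ABM by auto
      have r: "\<rho>1 x = f1 x" and r2: "(\<rho>1 has_real_derivative f2 x) (at x)" using rho1_f[OF x0(1) True] xB by auto
      have fpos: "f x > 0" using F1(2) xB x0 by auto
      have fg: "\<eta> x * (g1 x)\<^sup>2 / (f x * g2 x) \<le> \<beta>" "2 * \<eta>1 x * g1 x + \<eta> x * g2 x - f2 x \<ge> 0" using FG2 xB by auto
      have fg': "\<eta> x * (g1 x)\<^sup>2 \<le> \<beta> * \<rho> x * g2 x"
        using fg(1) fpos g2 rho_f xB by (simp add: divide_le_eq mult.commute mult.left_commute)
      have hyp: "x * \<rho>1 x \<le> Cf * \<rho> x" "f2 x \<le> 2 * \<eta>1 x * g1 x + \<eta> x * g2 x" "P x + f2 x \<ge> 0"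
        using F2 rho_f r fg F3 P_f xB by auto
      show ?thesis
        using DERIV_add[OF dPsi[OF x0(2) x(2) r2] dQ]
          pw_hi[OF common(1,2) Ut hyp(1) Cf_pos beta hyp(2,3) g2(1) eta_nonneg fg', of "W t x" lam]
        unfolding jf_def by (auto simp: algebra_simps)
    next
      case False
      then have xB: "x > B" using x by auto
      have r: "\<rho>1 x = g1 x" and r2: "(\<rho>1 has_real_derivative g2 x) (at x)" using rho1_g[OF xB] by auto
      have gpos: "g x > 0" using G1 xB ABM by auto
      have et: "\<eta> x = 1" "\<eta>1 x = 0" using eta1 eta1_B xB by auto
      have gg: "(g1 x)\<^sup>2 / (g x * g2 x) \<le> \<beta>" using G3 xB by auto
      have fg': "\<eta> x * (g1 x)\<^sup>2 \<le> \<beta> * \<rho> x * g2 x"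
        using gg gpos g2 rho_g xB et by (simp add: divide_le_eq mult.commute mult.left_commute)
      have hyp: "x * \<rho>1 x \<le> Cf * \<rho> x" "g2 x \<le> 2 * \<eta>1 x * g1 x + \<eta> x * g2 x" "P x + g2 x \<ge> 0"
      proof -
        have "x * \<rho>1 x \<le> 0" using r g2 x0 by (simp add: mult_nonneg_nonpos)
        moreover have "Cf * \<rho> x \<ge> 0" using Cf_pos common by simp
        ultimately show "x * \<rho>1 x \<le> Cf * \<rho> x" by linarith
        show "g2 x \<le> 2 * \<eta>1 x * g1 x + \<eta> x * g2 x" using et by simp
        show "P x + g2 x \<ge> 0" using common g2 by simp
      qed
      show ?thesis
        using DERIV_add[OF dPsi[OF x0(2) x(2) r2] dQ]
          pw_hi[OF common(1,2) Ut hyp(1) Cf_pos beta hyp(2,3) g2(1) eta_nonneg fg', of "W t x" lam]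
        unfolding jf_def by (auto simp: algebra_simps)
    qed
  qed
  have contPQ: "continuous_on {M0..R} (\<lambda>y. Psi y + Q y)"
    using continuous_on_subset[OF contPsi, of "{M0..R}"] contQ e ABM by (intro continuous_intros) auto
  have s3: "Psi M0 + Q M0 \<le> Psi B + Q B"
    by (rule DERIV_nonneg_imp_increasing_open[where f="\<lambda>y. Psi y + Q y"])
       (use ABM R hi in \<open>auto intro: continuous_on_subset[OF contPQ]\<close>)
  have s4: "Psi B + Q B \<le> Psi R + Q R"
    by (rule DERIV_nonneg_imp_increasing_open[where f="\<lambda>y. Psi y + Q y"])
       (use ABM R hi in \<open>auto intro: continuous_on_subset[OF contPQ]\<close>)
  have QM0: "Q M0 = 0" unfolding Q_def by (simp add: eta_M0)
  have QR: "Q R \<le> 0"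
  proof -
    have "\<eta> R = 1" "g1 R < 0" using eta1 G2 R ABM by auto
    then show ?thesis unfolding Q_def by (simp add: mult_nonpos_nonneg)
  qed
  have "Psi e \<le> Psi R" using s1 s2 s3 s4 QM0 QR by linarith
  moreover have "I e = 0" "J e = 0" by (simp_all add: I_def J_def)
  ultimately show ?thesis unfolding Psi_def I_def[symmetric] J_def[symmetric] by simp
qed

lemma Dn_conv: assumes t: "t \<in> {0<..<T}" shows "(\<lambda>n. Dn n t) \<longlonglongrightarrow> Elim t"
proof (rule LIMSEQ_I)
  fix r :: real assume r: "r > 0"
  obtain N where N: "\<forall>n\<ge>N. \<forall>s\<in>{0<..<T}. \<bar>Dn n s - Elim s\<bar> \<le> r/2" using Dn_unif[of "r/2"] r by auto
  then show "\<exists>no. \<forall>n\<ge>no. norm (Dn n t - Elim t) < r" using t r by (intro exI[of _ N]) force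
qed

lemma W_bd0: assumes s: "s \<in> {0<..<T}" and y: "y \<ge> 0" shows "\<bar>W s y\<bar> \<le> C * y"
proof -
  have "\<bar>W s y\<bar> \<le> integral {0..y} (\<lambda>x. C)"
    unfolding W_def
  proof (rule integral_abs_le)
    show "w s integrable_on {0..y}" using w_cont_ab[OF s, of 0 y] by (simp add: integrable_continuous_interval)
    show "\<bar>w s x\<bar> \<le> C" if "x \<in> {0..y}" for x
      using w_bd[OF s, of x] that C_nonneg by (smt (verit) atLeastAtMost_iff exp_le_one_iff mult_left_le neg_le_0_iff_le)
  qed auto
  then show ?thesis using y by (simp add: mult.commute)
qed

lemma jf_integral: assumes s: "s \<in> {0<..<T}" and a: "0 \<le> a"
  shows "integral {a..b} (jf lam s) = (4*(1-\<beta>)*lam - K*(3+Cf)) * integral {a..b} (\<lambda>y. \<rho> y * w s y)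
     - 2*(1-\<beta>)*lam\<^sup>2 * integral {a..b} \<rho>"
proof -
  have i1: "(\<lambda>y. \<rho> y * w s y) integrable_on {a..b}"
    using continuous_on_subset[OF rho_cont, of "{a..b}"] w_cont_ab[OF s a, of b] a
    by (intro integrable_continuous_interval continuous_intros) auto
  have i2: "\<rho> integrable_on {a..b}"
    using continuous_on_subset[OF rho_cont, of "{a..b}"] a by (intro integrable_continuous_interval) auto
  have "jf lam s = (\<lambda>y. (4*(1-\<beta>)*lam - K*(3+Cf)) * (\<rho> y * w s y) - 2*(1-\<beta>)*lam\<^sup>2 * \<rho> y)"
    by (auto simp: jf_def fun_eq_iff algebra_simps)
  then show ?thesis
    using integral_diff[OF integrable_on_cmult_left[OF i1] integrable_on_cmult_left[OF i2]] by simp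
qed

lemma Elim_ge: assumes t: "t \<in> {0<..<T}"
  shows "Elim t \<ge> (4*(1-\<beta>)*lam - K*(3+Cf)) * G t - 2*(1-\<beta>)*lam\<^sup>2 * integral {0..} \<rho>"
proof -
  define c1 where "c1 = 4*(1-\<beta>)*lam - K*(3+Cf)"
  define c2 where "c2 = 2*(1-\<beta>)*lam\<^sup>2"
  define L where "L n = c1 * Gn n t - c2 * integral {en n..Rn n} \<rho> + Df t (Rn n) - Df t (en n)" for n
  have ev: "\<forall>\<^sub>F n in sequentially. en n < A \<and> B < Rn n"
    using order_tendstoD(2)[OF en_lim, of A] filterlim_at_top_dense[THEN iffD1, OF Rn_lim, rule_format, of B] ABM
    by (auto intro: eventually_conj)
  have le: "\<forall>\<^sub>F n in sequentially. L n \<le> Dn n t"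
    using ev
  proof eventually_elim
    case (elim n)
    have "integral {en n..Rn n} (\<lambda>y. \<rho> y * wt t y) \<ge> integral {en n..Rn n} (jf lam t) + Df t (Rn n) - Df t (en n)"
      by (rule key_ineq[OF t en_Rn(1)]) (use elim in auto)
    then show ?case unfolding L_def Dn_def Gn_def c1_def c2_def
      using jf_integral[OF t, where a="en n" and b="Rn n" and lam=lam] en_Rn(1)[of n] by simp
  qed
  have lN: "(\<lambda>n. integral {en n..Rn n} \<rho>) \<longlonglongrightarrow> integral {0..} \<rho>"
  proof (rule trunc_lim[where h="\<lambda>y. \<bar>\<rho> y\<bar>"])
    show "continuous_on {0..} \<rho>" by (rule rho_cont)
    show "(\<lambda>y. \<bar>\<rho> y\<bar>) integrable_on {0..}" using rho_int by (simp add: absolutely_integrable_on_def)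
  qed (simp_all add: rho0)
  have lR: "(\<lambda>n. Df t (Rn n)) \<longlonglongrightarrow> 0"
  proof (rule Lim_null_comparison)
    have g1l: "(\<lambda>n. g1 (Rn n)) \<longlonglongrightarrow> 0" by (rule filterlim_compose[OF G1(1) Rn_lim])
    show "(\<lambda>n. K2 * ((1 + Rn n) * exp (- Rn n)) + \<bar>g1 (Rn n)\<bar> * (C*C) / 2 + R1 * C * ((1 + Rn n) * exp (- Rn n))) \<longlonglongrightarrow> 0"
      using tendsto_add[OF tendsto_add[OF tendsto_mult_right_zero[OF lim_exp_seq[of 1], of K2]
          tendsto_divide_zero[OF tendsto_mult_left_zero[OF tendsto_rabs_zero[OF g1l], of "C*C"], of 2]]
          tendsto_mult_right_zero[OF lim_exp_seq[of 1], of "R1*C"]] by simp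
    show "\<forall>\<^sub>F n in sequentially. norm (Df t (Rn n)) \<le> K2 * ((1 + Rn n) * exp (- Rn n)) + \<bar>g1 (Rn n)\<bar> * (C*C) / 2 + R1 * C * ((1 + Rn n) * exp (- Rn n))"
      using ev
    proof eventually_elim
      case (elim n)
      define R where "R = Rn n"
      have R: "R > B" "R > 0" using elim ABM by (auto simp: R_def)
      have b1: "\<bar>D0 t R\<bar> \<le> K2 * ((1 + R) * exp (- R))" using D0_bd_inf[OF t R(2)] by (simp add: K2_def)
      have b2: "\<bar>\<rho>1 R * (W t R)\<^sup>2 / 2\<bar> \<le> \<bar>g1 R\<bar> * (C*C) / 2"
      proof -
        have "\<bar>\<rho>1 R * (W t R * W t R)\<bar> \<le> \<bar>g1 R\<bar> * (C*C)"
          using rho1_g(1)[OF R(1)] W_bd[OF t, of R] R by (intro abs_mult_le) auto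
        then show ?thesis by (simp add: power2_eq_square)
      qed
      have b3: "\<bar>\<rho>1 R * w t R\<bar> \<le> R1 * C * ((1 + R) * exp (- R))"
      proof -
        have "\<bar>\<rho>1 R * w t R\<bar> \<le> R1 * (C * exp (- R))"
          using rho1_bd w_bd[OF t, of R] R by (intro abs_mult_le) auto
        also have "\<dots> \<le> R1 * C * ((1 + R) * exp (- R))"
          using consts_nonneg C_nonneg R by (simp add: mult_left_mono mult.assoc)
        finally show ?thesis .
      qed
      show ?case unfolding Df_def R_def[symmetric] using b1 b2 b3 by (simp add: abs_le_iff)
    qed
  qed
  have l0: "(\<lambda>n. Df t (en n)) \<longlonglongrightarrow> 0 + 0 - \<rho>1 0 * w t 0"
    unfolding Df_def
  proof (intro tendsto_add tendsto_diff)
    have "(\<lambda>n. \<rho> (en n)) \<longlonglongrightarrow> \<rho> 0"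
      by (rule continuous_on_tendsto_compose[OF rho_cont en_lim]) (use en_Rn(1) in \<open>auto intro!: always_eventually less_imp_le\<close>)
    then have l4: "(\<lambda>n. K3 * (\<bar>\<rho> (en n)\<bar> + en n)) \<longlonglongrightarrow> K3 * (\<bar>0\<bar> + 0)"
      using rho0 by (intro tendsto_intros en_lim) auto
    show "(\<lambda>n. D0 t (en n)) \<longlonglongrightarrow> 0"
    proof (rule Lim_null_comparison[OF _ l4[simplified]])
      show "\<forall>\<^sub>F n in sequentially. norm (D0 t (en n)) \<le> K3 * (\<bar>\<rho> (en n)\<bar> + en n)"
        using D0_bd_0[OF t en_Rn(1)] by (simp add: K3_def)
    qed
    show "(\<lambda>n. \<rho>1 (en n) * (W t (en n))\<^sup>2 / 2) \<longlonglongrightarrow> 0"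
    proof (rule Lim_null_comparison)
      have "(\<lambda>n. R1 * ((C * en n) * (C * en n)) / 2) \<longlonglongrightarrow> R1 * ((C * 0) * (C * 0)) / 2"
        by (intro tendsto_intros en_lim) simp_all
      then show "(\<lambda>n. R1 * ((C * en n) * (C * en n)) / 2) \<longlonglongrightarrow> 0" by simp
      show "\<forall>\<^sub>F n in sequentially. norm (\<rho>1 (en n) * (W t (en n))\<^sup>2 / 2) \<le> R1 * ((C * en n) * (C * en n)) / 2"
      proof (rule always_eventually, rule allI)
        fix n
        have "\<bar>\<rho>1 (en n) * (W t (en n) * W t (en n))\<bar> \<le> R1 * ((C * en n) * (C * en n))"
          using rho1_bd W_bd0[OF t, of "en n"] en_Rn(1)[of n] by (intro abs_mult_le) auto
        then show "norm (\<rho>1 (en n) * (W t (en n))\<^sup>2 / 2) \<le> R1 * ((C * en n) * (C * en n)) / 2"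
          by (simp add: power2_eq_square)
      qed
    qed
    show "(\<lambda>n. \<rho>1 (en n) * w t (en n)) \<longlonglongrightarrow> \<rho>1 0 * w t 0"
      by (intro tendsto_mult continuous_on_tendsto_compose[OF rho1_cont en_lim]
          continuous_on_tendsto_compose[OF w_cont_s[OF t] en_lim])
         (use en_Rn(1) in \<open>auto intro!: always_eventually less_imp_le\<close>)
  qed
  have lL: "L \<longlonglongrightarrow> c1 * G t - c2 * integral {0..} \<rho> + 0 - (0 + 0 - \<rho>1 0 * w t 0)"
    unfolding L_def[abs_def] by (intro tendsto_intros G_lim[OF t] lN lR l0)
  have "c1 * G t - c2 * integral {0..} \<rho> + 0 - (0 + 0 - \<rho>1 0 * w t 0) \<le> Elim t"
    by (rule tendsto_le[OF _ Dn_conv[OF t] lL le]) simp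
  moreover have "\<rho>1 0 * w t 0 \<ge> 0" using rho1_0 w_nonneg t by simp
  ultimately show ?thesis unfolding c1_def c2_def by simp
qed

end



theorem lemma3p3:
  fixes T :: real and U :: "real \<Rightarrow> real"
    and w wt wy wyy :: "real \<Rightarrow> real \<Rightarrow> real"
    and \<rho> :: "real \<Rightarrow> real" and Cf \<beta> :: real
  assumes T_pos: "T > 0"
    and U_cont: "continuous_on {0..T} U"
    and U_nonpos: "\<forall>t\<in>{0..T}. U t \<le> 0"
    \<comment> \<open>classical solution: w in C^{1,2}(H_T), continuous up to y = 0\<close>
    and w_cont: "continuous_on ({0<..<T} \<times> {0..}) (\<lambda>p. w (fst p) (snd p))"
    and wt_deriv: "\<forall>t\<in>{0<..<T}. \<forall>y>0. ((\<lambda>s. w s y) has_real_derivative wt t y) (at t)"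
    and wy_deriv: "\<forall>t\<in>{0<..<T}. \<forall>y>0. (w t has_real_derivative wy t y) (at y)"
    and wyy_deriv: "\<forall>t\<in>{0<..<T}. \<forall>y>0. (wy t has_real_derivative wyy t y) (at y)"
    and wt_cont: "continuous_on ({0<..<T} \<times> {0<..}) (\<lambda>p. wt (fst p) (snd p))"
    and wy_cont: "continuous_on ({0<..<T} \<times> {0<..}) (\<lambda>p. wy (fst p) (snd p))"
    and wyy_cont: "continuous_on ({0<..<T} \<times> {0<..}) (\<lambda>p. wyy (fst p) (snd p))"
    and w_nonneg: "\<forall>t\<in>{0<..<T}. \<forall>y\<ge>0. w t y \<ge> 0"
    and eq: "\<forall>t\<in>{0<..<T}. \<forall>y>0.
               wt t y - (w t y)\<^sup>2
               + (integral {0..y} (w t) + U t * y) * wy t y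
               - 2 * U t * w t y
               - integral {y..} (w t)
               - wyy t y = 0"
    and bc0: "\<forall>t\<in>{0<..<T}. w t 0 = - U t"
    and bcinf: "\<forall>t\<in>{0<..<T}. (w t \<longlongrightarrow> 0) at_top"
    and decay: "\<exists>C. \<forall>t\<in>{0<..<T}. \<forall>y>0. (\<bar>w t y\<bar> + \<bar>wy t y\<bar>) * exp y \<le> C"
    and adm: "admissible_weight \<rho> Cf \<beta>"
  shows "\<forall>t\<in>{0<..<T}.
           (\<lambda>s. integral {0..} (\<lambda>y. \<rho> y * w s y)) differentiable (at t) \<and>
           deriv (\<lambda>s. integral {0..} (\<lambda>y. \<rho> y * w s y)) t
             \<ge> 2 * (1 - \<beta>) / integral {0..} (\<lambda>y. \<bar>\<rho> y\<bar>)
                 * (integral {0..} (\<lambda>y. \<rho> y * w t y))\<^sup>2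
               - (SUP s\<in>{0..T}. \<bar>U s\<bar>) * (3 + Cf) * integral {0..} (\<lambda>y. \<rho> y * w t y)"
  proof -
  have adm': "(\<forall>y\<ge>0. \<rho> y \<ge> 0) \<and> (\<exists>\<rho>1. (\<forall>y\<ge>0. (\<rho> has_real_derivative \<rho>1 y) (at y within {0..})) \<and>
          continuous_on {0..} \<rho>1 \<and>
          \<comment> \<open>W^{2,infinity}(R_+)\<close>
          bounded (\<rho> ` {0..}) \<and> bounded (\<rho>1 ` {0..}) \<and>
          (\<exists>L. \<forall>x\<ge>0. \<forall>y\<ge>0. \<bar>\<rho>1 x - \<rho>1 y\<bar> \<le> L * \<bar>x - y\<bar>)) \<and> \<rho> absolutely_integrable_on {0..} \<and>
    Cf > 0 \<and> 0 < \<beta> \<and> \<beta> < 1 \<and> (\<exists>A M0 B f f1 f2 g g1 g2 \<eta> \<eta>1. 0 < A \<and> A < M0 \<and> M0 < B \<and>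
       (\<forall>y\<in>{0..B}. \<rho> y = f y) \<and> (\<forall>y>B. \<rho> y = g y) \<and>
       \<comment> \<open>f in C^1([0,B]) \<inter> C^2([0,B] - {A})\<close>
       (\<forall>y\<in>{0..B}. (f has_real_derivative f1 y) (at y within {0..B})) \<and>
       continuous_on {0..B} f1 \<and>
       (\<forall>y\<in>{0..B} - {A}. (f1 has_real_derivative f2 y) (at y within {0..B})) \<and>
       continuous_on ({0..B} - {A}) f2 \<and>
       \<comment> \<open>g in C^2([M0,infinity)) \<inter> L^1([M0,infinity))\<close>
       (\<forall>y\<ge>M0. (g has_real_derivative g1 y) (at y within {M0..})) \<and>
       (\<forall>y\<ge>M0. (g1 has_real_derivative g2 y) (at y within {M0..})) \<and>
       continuous_on {M0..} g2 \<and>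
       g absolutely_integrable_on {M0..} \<and>
       \<comment> \<open>cut-off eta\<close>
       smooth_real \<eta> \<and> (\<forall>x. (\<eta> has_real_derivative \<eta>1 x) (at x)) \<and>
       (\<forall>x<M0. \<eta> x = 0) \<and> (\<forall>x>B. \<eta> x = 1) \<and>
       (\<forall>x. 0 \<le> \<eta>1 x \<and> \<eta>1 x \<le> 2 / (B - M0)) \<and>
       \<comment> \<open>(F1)-(F4)\<close>
       f 0 = 0 \<and> (\<forall>y\<in>{0<..B}. f y > 0) \<and>
       (\<forall>y\<in>{0..B}. y * f1 y \<le> Cf * f y) \<and>
       (\<forall>y\<in>{0..B} - {A}. integral {0..y} f + f2 y \<ge> 0) \<and>
       (\<forall>y\<in>{0..B} - {A}. f2 y \<le> 0) \<and>
       \<comment> \<open>(G1)-(G3)\<close>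
       (g \<longlongrightarrow> 0) at_top \<and> (g1 \<longlongrightarrow> 0) at_top \<and> (\<forall>y>M0. g y > 0) \<and>
       (\<forall>y>M0. g1 y < 0 \<and> g2 y > 0) \<and>
       (\<forall>y\<ge>B. (g1 y)\<^sup>2 / (g y * g2 y) \<le> \<beta>) \<and>
       \<comment> \<open>(FG1)-(FG2)\<close>
       f B = g B \<and> f1 B = g1 B \<and>
       (\<forall>y\<in>{M0..B}. \<eta> y * (g1 y)\<^sup>2 / (f y * g2 y) \<le> \<beta> \<and>
                      2 * \<eta>1 y * g1 y + \<eta> y * g2 y - f2 y \<ge> 0))"
    using adm unfolding admissible_weight_def .
  have rho_nonneg: "\<forall>y\<ge>0. \<rho> y \<ge> 0"
    using adm' by - (elim conjE, assumption)
  have rho_int: "\<rho> absolutely_integrable_on {0..}"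
    using adm' by - (elim conjE, assumption)
  have Cf_pos: "Cf > 0"
    using adm' by - (elim conjE, assumption)
  have beta_pos: "0 < \<beta>"
    using adm' by - (elim conjE, assumption)
  have beta_lt: "\<beta> < 1"
    using adm' by - (elim conjE, assumption)
  have ex1: "\<exists>\<rho>1. (\<forall>y\<ge>0. (\<rho> has_real_derivative \<rho>1 y) (at y within {0..})) \<and>
          continuous_on {0..} \<rho>1 \<and>
          \<comment> \<open>W^{2,infinity}(R_+)\<close>
          bounded (\<rho> ` {0..}) \<and> bounded (\<rho>1 ` {0..}) \<and>
          (\<exists>L. \<forall>x\<ge>0. \<forall>y\<ge>0. \<bar>\<rho>1 x - \<rho>1 y\<bar> \<le> L * \<bar>x - y\<bar>)"
    using adm' by - (elim conjE, assumption)
  have ex2: "\<exists>A M0 B f f1 f2 g g1 g2 \<eta> \<eta>1. 0 < A \<and> A < M0 \<and> M0 < B \<and>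
       (\<forall>y\<in>{0..B}. \<rho> y = f y) \<and> (\<forall>y>B. \<rho> y = g y) \<and>
       \<comment> \<open>f in C^1([0,B]) \<inter> C^2([0,B] - {A})\<close>
       (\<forall>y\<in>{0..B}. (f has_real_derivative f1 y) (at y within {0..B})) \<and>
       continuous_on {0..B} f1 \<and>
       (\<forall>y\<in>{0..B} - {A}. (f1 has_real_derivative f2 y) (at y within {0..B})) \<and>
       continuous_on ({0..B} - {A}) f2 \<and>
       \<comment> \<open>g in C^2([M0,infinity)) \<inter> L^1([M0,infinity))\<close>
       (\<forall>y\<ge>M0. (g has_real_derivative g1 y) (at y within {M0..})) \<and>
       (\<forall>y\<ge>M0. (g1 has_real_derivative g2 y) (at y within {M0..})) \<and>
       continuous_on {M0..} g2 \<and>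
       g absolutely_integrable_on {M0..} \<and>
       \<comment> \<open>cut-off eta\<close>
       smooth_real \<eta> \<and> (\<forall>x. (\<eta> has_real_derivative \<eta>1 x) (at x)) \<and>
       (\<forall>x<M0. \<eta> x = 0) \<and> (\<forall>x>B. \<eta> x = 1) \<and>
       (\<forall>x. 0 \<le> \<eta>1 x \<and> \<eta>1 x \<le> 2 / (B - M0)) \<and>
       \<comment> \<open>(F1)-(F4)\<close>
       f 0 = 0 \<and> (\<forall>y\<in>{0<..B}. f y > 0) \<and>
       (\<forall>y\<in>{0..B}. y * f1 y \<le> Cf * f y) \<and>
       (\<forall>y\<in>{0..B} - {A}. integral {0..y} f + f2 y \<ge> 0) \<and>
       (\<forall>y\<in>{0..B} - {A}. f2 y \<le> 0) \<and>
       \<comment> \<open>(G1)-(G3)\<close>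
       (g \<longlongrightarrow> 0) at_top \<and> (g1 \<longlongrightarrow> 0) at_top \<and> (\<forall>y>M0. g y > 0) \<and>
       (\<forall>y>M0. g1 y < 0 \<and> g2 y > 0) \<and>
       (\<forall>y\<ge>B. (g1 y)\<^sup>2 / (g y * g2 y) \<le> \<beta>) \<and>
       \<comment> \<open>(FG1)-(FG2)\<close>
       f B = g B \<and> f1 B = g1 B \<and>
       (\<forall>y\<in>{M0..B}. \<eta> y * (g1 y)\<^sup>2 / (f y * g2 y) \<le> \<beta> \<and>
                      2 * \<eta>1 y * g1 y + \<eta> y * g2 y - f2 y \<ge> 0)"
    using adm' by - (elim conjE, assumption)
  obtain \<rho>1 where H1: "(\<forall>y\<ge>0. (\<rho> has_real_derivative \<rho>1 y) (at y within {0..})) \<and>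
          continuous_on {0..} \<rho>1 \<and>
          \<comment> \<open>W^{2,infinity}(R_+)\<close>
          bounded (\<rho> ` {0..}) \<and> bounded (\<rho>1 ` {0..}) \<and>
          (\<exists>L. \<forall>x\<ge>0. \<forall>y\<ge>0. \<bar>\<rho>1 x - \<rho>1 y\<bar> \<le> L * \<bar>x - y\<bar>)"
    using ex1 apply - apply (elim exE) apply (rule that) apply assumption done
  have rho_deriv: "\<forall>y\<ge>0. (\<rho> has_real_derivative \<rho>1 y) (at y within {0..})"
    using H1 by - (elim conjE, assumption)
  have rho1_cont: "continuous_on {0..} \<rho>1"
    using H1 by - (elim conjE, assumption)
  have bd1: "bounded (\<rho> ` {0..})"
    using H1 by - (elim conjE, assumption)
  have bd2: "bounded (\<rho>1 ` {0..})"
    using H1 by - (elim conjE, assumption)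
  obtain A M0 B f f1 f2 g g1 g2 \<eta> \<eta>1 where H2: "0 < A \<and> A < M0 \<and> M0 < B \<and>
       (\<forall>y\<in>{0..B}. \<rho> y = f y) \<and> (\<forall>y>B. \<rho> y = g y) \<and>
       \<comment> \<open>f in C^1([0,B]) \<inter> C^2([0,B] - {A})\<close>
       (\<forall>y\<in>{0..B}. (f has_real_derivative f1 y) (at y within {0..B})) \<and>
       continuous_on {0..B} f1 \<and>
       (\<forall>y\<in>{0..B} - {A}. (f1 has_real_derivative f2 y) (at y within {0..B})) \<and>
       continuous_on ({0..B} - {A}) f2 \<and>
       \<comment> \<open>g in C^2([M0,infinity)) \<inter> L^1([M0,infinity))\<close>
       (\<forall>y\<ge>M0. (g has_real_derivative g1 y) (at y within {M0..})) \<and>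
       (\<forall>y\<ge>M0. (g1 has_real_derivative g2 y) (at y within {M0..})) \<and>
       continuous_on {M0..} g2 \<and>
       g absolutely_integrable_on {M0..} \<and>
       \<comment> \<open>cut-off eta\<close>
       smooth_real \<eta> \<and> (\<forall>x. (\<eta> has_real_derivative \<eta>1 x) (at x)) \<and>
       (\<forall>x<M0. \<eta> x = 0) \<and> (\<forall>x>B. \<eta> x = 1) \<and>
       (\<forall>x. 0 \<le> \<eta>1 x \<and> \<eta>1 x \<le> 2 / (B - M0)) \<and>
       \<comment> \<open>(F1)-(F4)\<close>
       f 0 = 0 \<and> (\<forall>y\<in>{0<..B}. f y > 0) \<and>
       (\<forall>y\<in>{0..B}. y * f1 y \<le> Cf * f y) \<and>
       (\<forall>y\<in>{0..B} - {A}. integral {0..y} f + f2 y \<ge> 0) \<and>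
       (\<forall>y\<in>{0..B} - {A}. f2 y \<le> 0) \<and>
       \<comment> \<open>(G1)-(G3)\<close>
       (g \<longlongrightarrow> 0) at_top \<and> (g1 \<longlongrightarrow> 0) at_top \<and> (\<forall>y>M0. g y > 0) \<and>
       (\<forall>y>M0. g1 y < 0 \<and> g2 y > 0) \<and>
       (\<forall>y\<ge>B. (g1 y)\<^sup>2 / (g y * g2 y) \<le> \<beta>) \<and>
       \<comment> \<open>(FG1)-(FG2)\<close>
       f B = g B \<and> f1 B = g1 B \<and>
       (\<forall>y\<in>{M0..B}. \<eta> y * (g1 y)\<^sup>2 / (f y * g2 y) \<le> \<beta> \<and>
                      2 * \<eta>1 y * g1 y + \<eta> y * g2 y - f2 y \<ge> 0)"
    using ex2 apply - apply (elim exE) apply (rule that) apply assumption done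
  have ABM1: "0 < A"
    using H2 by - (elim conjE, assumption)
  have ABM2: "A < M0"
    using H2 by - (elim conjE, assumption)
  have ABM3: "M0 < B"
    using H2 by - (elim conjE, assumption)
  have rho_f: "\<forall>y\<in>{0..B}. \<rho> y = f y"
    using H2 by - (elim conjE, assumption)
  have rho_g: "\<forall>y>B. \<rho> y = g y"
    using H2 by - (elim conjE, assumption)
  have f_deriv: "\<forall>y\<in>{0..B}. (f has_real_derivative f1 y) (at y within {0..B})"
    using H2 by - (elim conjE, assumption)
  have f1_deriv: "\<forall>y\<in>{0..B} - {A}. (f1 has_real_derivative f2 y) (at y within {0..B})"
    using H2 by - (elim conjE, assumption)
  have g_deriv: "\<forall>y\<ge>M0. (g has_real_derivative g1 y) (at y within {M0..})"
    using H2 by - (elim conjE, assumption)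
  have g1_deriv: "\<forall>y\<ge>M0. (g1 has_real_derivative g2 y) (at y within {M0..})"
    using H2 by - (elim conjE, assumption)
  have eta_deriv: "\<forall>x. (\<eta> has_real_derivative \<eta>1 x) (at x)"
    using H2 by - (elim conjE, assumption)
  have eta0: "\<forall>x<M0. \<eta> x = 0"
    using H2 by - (elim conjE, assumption)
  have eta1: "\<forall>x>B. \<eta> x = 1"
    using H2 by - (elim conjE, assumption)
  have eta1_bd: "\<forall>x. 0 \<le> \<eta>1 x \<and> \<eta>1 x \<le> 2 / (B - M0)"
    using H2 by - (elim conjE, assumption)
  have F1a: "f 0 = 0"
    using H2 by - (elim conjE, assumption)
  have F1b: "\<forall>y\<in>{0<..B}. f y > 0"
    using H2 by - (elim conjE, assumption)
  have F2: "\<forall>y\<in>{0..B}. y * f1 y \<le> Cf * f y"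
    using H2 by - (elim conjE, assumption)
  have F3: "\<forall>y\<in>{0..B} - {A}. integral {0..y} f + f2 y \<ge> 0"
    using H2 by - (elim conjE, assumption)
  have F4: "\<forall>y\<in>{0..B} - {A}. f2 y \<le> 0"
    using H2 by - (elim conjE, assumption)
  have G1b: "(g1 \<longlongrightarrow> 0) at_top"
    using H2 by - (elim conjE, assumption)
  have G1c: "\<forall>y>M0. g y > 0"
    using H2 by - (elim conjE, assumption)
  have G2: "\<forall>y>M0. g1 y < 0 \<and> g2 y > 0"
    using H2 by - (elim conjE, assumption)
  have G3: "\<forall>y\<ge>B. (g1 y)\<^sup>2 / (g y * g2 y) \<le> \<beta>"
    using H2 by - (elim conjE, assumption)
  have FG2: "\<forall>y\<in>{M0..B}. \<eta> y * (g1 y)\<^sup>2 / (f y * g2 y) \<le> \<beta> \<and> 2 * \<eta>1 y * g1 y + \<eta> y * g2 y - f2 y \<ge> 0"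
    using H2 by - (elim conjE, assumption)
  obtain Rb where Rb: "\<forall>y\<ge>0. \<bar>\<rho> y\<bar> \<le> Rb" using bd1 unfolding bounded_iff by auto
  obtain R1 where R1: "\<forall>y\<ge>0. \<bar>\<rho>1 y\<bar> \<le> R1" using bd2 unfolding bounded_iff by auto
  obtain C where C: "\<forall>t\<in>{0<..<T}. \<forall>y>0. (\<bar>w t y\<bar> + \<bar>wy t y\<bar>) * exp y \<le> C" using decay by blast
  define K where "K = (SUP s\<in>{0..T}. \<bar>U s\<bar>)"
  have "bdd_above ((\<lambda>s. \<bar>U s\<bar>) ` {0..T})"
  proof -
    have "compact ((\<lambda>s. \<bar>U s\<bar>) ` {0..T})"
      using U_cont by (intro compact_continuous_image continuous_intros) auto
    then show ?thesis by (intro bounded_imp_bdd_above compact_imp_bounded)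
  qed
  then have U_bd: "\<forall>t\<in>{0..T}. \<bar>U t\<bar> \<le> K" unfolding K_def by (auto intro: cSUP_upper)
  have eta1_bd': "\<forall>x. 0 \<le> \<eta>1 x" using eta1_bd by blast
  note facts = T_pos U_nonpos U_bd w_cont wt_deriv wy_deriv wyy_deriv wt_cont w_nonneg eq C rho_nonneg
         rho_deriv rho1_cont Rb R1 rho_int Cf_pos beta_pos beta_lt ABM1 ABM2 ABM3 rho_f rho_g f_deriv f1_deriv
         g_deriv g1_deriv eta_deriv eta0 eta1 eta1_bd' F1a F1b F2 F3 F4 G1b G1c G2 G3 FG2
  interpret S: setting T U w wt wy wyy \<rho> \<rho>1 Cf \<beta> C K Rb R1 A M0 B f f1 f2 g g1 g2 \<eta> \<eta>1
    by unfold_locales (fact facts)+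
  have Geq: "(\<lambda>s. integral {0..} (\<lambda>y. \<rho> y * w s y)) = S.G" by (simp add: S.G_def fun_eq_iff)
  have Neq: "integral {0..} (\<lambda>y. \<bar>\<rho> y\<bar>) = integral {0..} \<rho>"
    by (rule integral_cong) (use rho_nonneg in auto)
  show ?thesis
  proof
    fix t assume t: "t \<in> {0<..<T}"
    have d: "(S.G has_real_derivative S.Elim t) (at t)" by (rule S.G_has_deriv[OF t])
    define N where "N = integral {0..} \<rho>"
    define Gt where "Gt = S.G t"
    have main: "S.Elim t \<ge> 2 * (1 - \<beta>) / N * Gt\<^sup>2 - K * (3 + Cf) * Gt"
    proof (cases "N = 0")
      case True
      then show ?thesis using S.Elim_ge[OF t, of 0] by (simp add: Gt_def N_def)
    next
      case False
      have "S.Elim t \<ge> (4*(1-\<beta>)*(Gt/N) - K*(3+Cf)) * Gt - 2*(1-\<beta>)*(Gt/N)\<^sup>2 * N"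
        using S.Elim_ge[OF t, of "Gt/N"] by (simp add: Gt_def N_def)
      moreover have "(4*(1-\<beta>)*(Gt/N) - K*(3+Cf)) * Gt - 2*(1-\<beta>)*(Gt/N)\<^sup>2 * N
          = 2 * (1 - \<beta>) / N * Gt\<^sup>2 - K * (3 + Cf) * Gt"
        using False by (simp add: field_simps power2_eq_square)
      ultimately show ?thesis by simp
    qed
    show "(\<lambda>s. integral {0..} (\<lambda>y. \<rho> y * w s y)) differentiable (at t) \<and>
           deriv (\<lambda>s. integral {0..} (\<lambda>y. \<rho> y * w s y)) t
             \<ge> 2 * (1 - \<beta>) / integral {0..} (\<lambda>y. \<bar>\<rho> y\<bar>)
                 * (integral {0..} (\<lambda>y. \<rho> y * w t y))\<^sup>2
               - (SUP s\<in>{0..T}. \<bar>U s\<bar>) * (3 + Cf) * integral {0..} (\<lambda>y. \<rho> y * w t y)"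
    proof
      have dG: "((\<lambda>s. integral {0..} (\<lambda>y. \<rho> y * w s y)) has_real_derivative S.Elim t) (at t)"
        using d unfolding Geq .
      then show "(\<lambda>s. integral {0..} (\<lambda>y. \<rho> y * w s y)) differentiable (at t)"
        by (rule differentiableI[OF has_field_derivative_imp_has_derivative])
      have "deriv (\<lambda>s. integral {0..} (\<lambda>y. \<rho> y * w s y)) t = S.Elim t"
        by (rule DERIV_imp_deriv[OF dG])
      moreover have "Gt = integral {0..} (\<lambda>y. \<rho> y * w t y)" by (simp add: Gt_def S.G_def)
      ultimately show "deriv (\<lambda>s. integral {0..} (\<lambda>y. \<rho> y * w s y)) t
             \<ge> 2 * (1 - \<beta>) / integral {0..} (\<lambda>y. \<bar>\<rho> y\<bar>)
                 * (integral {0..} (\<lambda>y. \<rho> y * w t y))\<^sup>2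
               - (SUP s\<in>{0..T}. \<bar>U s\<bar>) * (3 + Cf) * integral {0..} (\<lambda>y. \<rho> y * w t y)"
        using main unfolding Neq K_def[symmetric] N_def[symmetric] by simp
    qed
  qed
qed

end
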